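(* Let $H=H_0+\lambda H_I$ be Hermitian on a finite-dimensional Hilbert space, and for $\beta>0$ let $\rho_\beta=e^{-\beta H}/Z$, $Z=\operatorname{Tr}e^{-\beta H}$, $\tilde\rho_\beta=\mathcal{P}\rho_\beta$, $\tilde H=\tilde H(\beta)=-\beta^{-1}\log\mathcal{P}e^{-\beta H}$ (so $\tilde\rho_\beta=e^{-\beta\tilde H}/Z$). Let $F=-\beta^{-1}\ln Z$, $S=\beta^2\partial_\beta F$, $U=\partial_\beta(\beta F)$, $\tilde S=-\operatorname{Tr}\tilde\rho_\beta\ln\tilde\rho_\beta$, $\tilde U=\operatorname{Tr}\tilde H\tilde\rho_\beta$. Then $S=-\operatorname{Tr}\rho_\beta\ln\rho_\beta$, $U=\operatorname{Tr}H\rho_\beta$, and $$S=\tilde S-\Delta S,\quad U=\tilde U-\Delta U,\qquad \Delta S=-\beta^2\operatorname{Tr}\big(\tilde\rho_\beta\,\partial_\beta\tilde H\big),\quad \Delta U=-\beta\operatorname{Tr}\big(\tilde\rho_\beta\,\partial_\beta\tilde H\big)=\beta^{-1}\Delta S.$$ Moreover $\Delta S\ge0$ and $\Delta U\ge0$.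
   Context: $H_0=\sum_\varepsilon\varepsilon\Pi_\varepsilon$ is the spectral decomposition of $H_0$ and $\mathcal{P}X=\sum_\varepsilon\Pi_\varepsilon X\Pi_\varepsilon$ (the long-time average $\lim_{T\to\infty}\frac1T\int_0^Te^{iH_0t}Xe^{-iH_0t}dt$). *)

theory Defs
  imports "HOL-Analysis.Analysis"
begin

type_synonym 'n cmat = "complex^'n^'n"

definition cadj :: "'n::finite cmat \<Rightarrow> 'n cmat" where
  "cadj A = (\<chi> i j. cnj (A $ j $ i))"

definition hermitian :: "'n::finite cmat \<Rightarrow> bool" where
  "hermitian A \<longleftrightarrow> cadj A = A"

primrec mpow :: "'n::finite cmat \<Rightarrow> nat \<Rightarrow> 'n cmat" where
  "mpow A 0 = mat 1"
| "mpow A (Suc k) = A ** mpow A k"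

definition mexp :: "'n::finite cmat \<Rightarrow> 'n cmat" where
  "mexp A = (\<Sum>k. (1 / fact k) *\<^sub>R mpow A k)"

definition mlog :: "'n::finite cmat \<Rightarrow> 'n cmat" where
  "mlog A = (THE L. hermitian L \<and> mexp L = A)"

definition eigenvalues :: "'n::finite cmat \<Rightarrow> complex set" where
  "eigenvalues A = {e. \<exists>v. v \<noteq> 0 \<and> A *v v = e *s v}"

definition orth_proj :: "'n::finite cmat \<Rightarrow> bool" where
  "orth_proj P \<longleftrightarrow> P ** P = P \<and> hermitian P"

definition eigenproj :: "'n::finite cmat \<Rightarrow> complex \<Rightarrow> 'n cmat" where
  "eigenproj A e = (THE P. orth_proj P \<and> range ((*v) P) = {v. A *v v = e *s v})"

definition pinch :: "'n::finite cmat \<Rightarrow> 'n cmat \<Rightarrow> 'n cmat" where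
  "pinch H0 X = (\<Sum>e\<in>eigenvalues H0. eigenproj H0 e ** X ** eigenproj H0 e)"

definition partition_fn :: "'n::finite cmat \<Rightarrow> real \<Rightarrow> real" where
  "partition_fn H b = Re (trace (mexp ((- b) *\<^sub>R H)))"

definition gibbs :: "'n::finite cmat \<Rightarrow> real \<Rightarrow> 'n cmat" where
  "gibbs H b = (1 / partition_fn H b) *\<^sub>R mexp ((- b) *\<^sub>R H)"

definition free_energy :: "'n::finite cmat \<Rightarrow> real \<Rightarrow> real" where
  "free_energy H b = - ln (partition_fn H b) / b"

definition eff_ham :: "'n::finite cmat \<Rightarrow> 'n cmat \<Rightarrow> real \<Rightarrow> 'n cmat" where
  "eff_ham H0 H b = (- 1 / b) *\<^sub>R mlog (pinch H0 (mexp ((- b) *\<^sub>R H)))"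

end

theory Submission
  imports Defs
begin

definition dmat :: "('n::finite \<Rightarrow> complex) \<Rightarrow> 'n cmat" where
  "dmat d = (\<chi> i j. if i = j then d i else 0)"

definition unitary :: "'n::finite cmat \<Rightarrow> bool" where
  "unitary U \<longleftrightarrow> cadj U ** U = mat 1 \<and> U ** cadj U = mat 1"

definition cinner :: "complex^'n::finite \<Rightarrow> complex^'n \<Rightarrow> complex" where
  "cinner x y = (\<Sum>i\<in>UNIV. cnj (x$i) * y$i)"

lemma mat_nth: "mat a $ i $ j = (if i = j then a else 0)"
  by (simp add: mat_def)

lemma mmult_nth: "(A ** B) $ i $ j = (\<Sum>k\<in>UNIV. A$i$k * B$k$j)"
  by (simp add: matrix_matrix_mult_def)

lemma mvmult_nth: "(A *v x) $ i = (\<Sum>k\<in>UNIV. A$i$k * x$k)"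
  by (simp add: matrix_vector_mult_def)

lemma cadj_nth[simp]: "cadj A $ i $ j = cnj (A $ j $ i)"
  by (simp add: cadj_def)

lemma dmat_nth: "dmat d $ i $ j = (if i = j then d i else 0)"
  by (simp add: dmat_def)

lemma cadj_cadj[simp]: "cadj (cadj A) = A"
  by (simp add: cadj_def vec_eq_iff)

lemma cadj_mult: "cadj (A ** B) = cadj B ** cadj A"
  by (simp add: vec_eq_iff mmult_nth mult.commute)

lemma cadj_add: "cadj (A + B) = cadj A + cadj B"
  by (simp add: vec_eq_iff)

lemma cadj_diff: "cadj (A - B) = cadj A - cadj B"
  by (simp add: vec_eq_iff)

lemma cadj_scaleR: "cadj (r *\<^sub>R A) = r *\<^sub>R cadj A"
  by (simp add: vec_eq_iff)

lemma cadj_uminus: "cadj (- A) = - cadj A"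
  by (simp add: vec_eq_iff)

lemma cadj_mat[simp]: "cadj (mat (of_real r)) = mat (of_real r)"
  by (simp add: vec_eq_iff mat_nth)

lemma cadj_mat1[simp]: "cadj (mat 1) = mat 1"
  using cadj_mat[of 1] by simp

lemma cadj_zero[simp]: "cadj 0 = 0"
  by (simp add: vec_eq_iff)

lemma cadj_dmat: "cadj (dmat d) = dmat (\<lambda>i. cnj (d i))"
  by (simp add: vec_eq_iff dmat_nth)

lemma cadj_dmat_real[simp]: "cadj (dmat (\<lambda>i. complex_of_real (d i))) = dmat (\<lambda>i. complex_of_real (d i))"
  by (simp add: cadj_dmat)

lemma cadj_sum: "finite S \<Longrightarrow> cadj (\<Sum>x\<in>S. f x) = (\<Sum>x\<in>S. cadj (f x))"
  by (induction S rule: finite_induct) (auto simp: cadj_add)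

lemma hermitian_add: "hermitian A \<Longrightarrow> hermitian B \<Longrightarrow> hermitian (A + B)"
  by (simp add: hermitian_def cadj_add)

lemma hermitian_diff: "hermitian A \<Longrightarrow> hermitian B \<Longrightarrow> hermitian (A - B)"
  by (simp add: hermitian_def cadj_diff)

lemma hermitian_scaleR: "hermitian A \<Longrightarrow> hermitian (r *\<^sub>R A)"
  by (simp add: hermitian_def cadj_scaleR)

lemma hermitian_uminus: "hermitian A \<Longrightarrow> hermitian (- A)"
  by (simp add: hermitian_def cadj_uminus)

lemma hermitian_mat: "hermitian (mat (of_real r))"
  by (simp add: hermitian_def)

lemma hermitian_sum: "finite S \<Longrightarrow> (\<And>x. x \<in> S \<Longrightarrow> hermitian (f x)) \<Longrightarrow> hermitian (\<Sum>x\<in>S. f x)"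
  by (induction S rule: finite_induct) (auto simp: hermitian_add hermitian_def cadj_add)

lemma hermitian_conj: "hermitian A \<Longrightarrow> hermitian (U ** A ** cadj U)"
  by (simp add: hermitian_def cadj_mult matrix_mul_assoc)

lemma hermitian_dmat_real: "hermitian (dmat (\<lambda>i. complex_of_real (d i)))"
  by (simp add: hermitian_def)

lemma dmat_mult_left: "(dmat a ** B) $ i $ j = a i * B $ i $ j"
proof -
  have "(dmat a ** B) $ i $ j = (\<Sum>k\<in>UNIV. (if k = i then a i * B $ i $ j else 0))"
    unfolding mmult_nth dmat_nth by (rule sum.cong) auto
  thus ?thesis by simp
qed

lemma dmat_mult_right: "(B ** dmat a) $ i $ j = B $ i $ j * a j"
proof -
  have "(B ** dmat a) $ i $ j = (\<Sum>k\<in>UNIV. (if k = j then B $ i $ j * a j else 0))"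
    unfolding mmult_nth dmat_nth by (rule sum.cong) auto
  thus ?thesis by simp
qed

lemma dmat_mult: "dmat a ** dmat b = dmat (\<lambda>i. a i * b i)"
  by (simp add: vec_eq_iff dmat_mult_left dmat_nth)

lemma dmat_add: "dmat a + dmat b = dmat (\<lambda>i. a i + b i)"
  by (simp add: vec_eq_iff dmat_nth)

lemma dmat_diff: "dmat a - dmat b = dmat (\<lambda>i. a i - b i)"
  by (simp add: vec_eq_iff dmat_nth)

lemma dmat_scaleR: "r *\<^sub>R dmat a = dmat (\<lambda>i. r *\<^sub>R a i)"
  by (simp add: vec_eq_iff dmat_nth)

lemma dmat_const: "dmat (\<lambda>i. c) = mat c"
  by (simp add: vec_eq_iff dmat_nth mat_nth)

lemma dmat_zero[simp]: "dmat (\<lambda>i. 0) = 0"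
  by (simp add: vec_eq_iff dmat_nth)

lemma dmat_sum: "finite S \<Longrightarrow> (\<Sum>x\<in>S. dmat (f x)) = dmat (\<lambda>i. \<Sum>x\<in>S. f x i)"
  by (induction S rule: finite_induct) (auto simp: dmat_add)

lemma trace_dmat: "trace (dmat d) = (\<Sum>i\<in>UNIV. d i)"
  by (simp add: trace_def dmat_nth)

lemma trace_scaleR: "trace (r *\<^sub>R (A::'n::finite cmat)) = r *\<^sub>R trace A"
  by (simp add: trace_def scaleR_sum_right)

lemma trace_zero[simp]: "trace (0::'n::finite cmat) = 0"
  by (simp add: trace_def)

lemma trace_sum: "finite S \<Longrightarrow> trace (\<Sum>x\<in>S. f x) = (\<Sum>x\<in>S. trace (f x :: 'n::finite cmat))"
  by (induction S rule: finite_induct) (auto simp: trace_add)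

lemma trace_uminus: "trace (- (A::'n::finite cmat)) = - trace A"
  by (simp add: trace_def sum_negf)

lemma trace_cadj: "trace (cadj A) = cnj (trace A)"
  by (simp add: trace_def)

lemma scaleR_mult_left: "(r *\<^sub>R A) ** (B::'n::finite cmat) = r *\<^sub>R (A ** B)"
  by (simp add: vec_eq_iff mmult_nth scaleR_sum_right)

lemma scaleR_mult_right: "A ** (r *\<^sub>R (B::'n::finite cmat)) = r *\<^sub>R (A ** B)"
  by (simp add: vec_eq_iff mmult_nth scaleR_sum_right)

lemma mult_add_left: "(A + B) ** (C::'n::finite cmat) = A ** C + B ** C"
  by (simp add: vec_eq_iff mmult_nth sum.distrib algebra_simps)

lemma mult_add_right: "C ** (A + B) = C ** A + C ** (B::'n::finite cmat)"
  by (simp add: matrix_add_ldistrib)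

lemma mult_sum_left: "finite S \<Longrightarrow> (\<Sum>x\<in>S. f x) ** (B::'n::finite cmat) = (\<Sum>x\<in>S. f x ** B)"
  by (induction S rule: finite_induct) (auto simp: mult_add_left)

lemma mult_sum_right: "finite S \<Longrightarrow> B ** (\<Sum>x\<in>S. f x) = (\<Sum>x\<in>S. B ** (f x :: 'n::finite cmat))"
  by (induction S rule: finite_induct) (auto simp: matrix_add_ldistrib)

lemma mult_diff_left: "(A - B) ** (C::'n::finite cmat) = A ** C - B ** C"
  by (simp add: vec_eq_iff mmult_nth sum_subtractf algebra_simps)

lemma mult_diff_right: "C ** (A - B) = C ** A - C ** (B::'n::finite cmat)"
  by (simp add: vec_eq_iff mmult_nth sum_subtractf algebra_simps)

lemma mult_uminus_left: "(- A) ** (C::'n::finite cmat) = - (A ** C)"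
  by (simp add: vec_eq_iff mmult_nth sum_negf)

lemma mult_uminus_right: "C ** (- A) = - (C ** (A::'n::finite cmat))"
  by (simp add: vec_eq_iff mmult_nth sum_negf)

lemma mult_zero_left[simp]: "0 ** (A::'n::finite cmat) = 0"
  by (simp add: vec_eq_iff mmult_nth)

lemma mult_zero_right[simp]: "(A::'n::finite cmat) ** 0 = 0"
  by (simp add: vec_eq_iff mmult_nth)

lemma unitary_conj_mult: "unitary U \<Longrightarrow> (U ** A ** cadj U) ** (U ** B ** cadj U) = U ** (A ** B) ** cadj U"
  by (simp add: unitary_def matrix_mul_assoc) (metis matrix_mul_assoc matrix_mul_rid)

lemma unitary_cadj: "unitary U \<Longrightarrow> unitary (cadj U)"
  by (simp add: unitary_def)

lemma unitary_mult: "unitary U \<Longrightarrow> unitary V \<Longrightarrow> unitary (U ** V)"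
  unfolding unitary_def cadj_mult
  by (metis matrix_mul_assoc matrix_mul_rid)

lemma unitary_left: "cadj U ** U = mat 1 \<Longrightarrow> unitary U"
  by (simp add: unitary_def matrix_left_right_inverse)

lemma trace_conj: "unitary U \<Longrightarrow> trace (U ** A ** cadj U) = trace A"
  by (metis matrix_mul_assoc matrix_mul_lid trace_mul_sym unitary_def)

lemma mpow_conj: "unitary U \<Longrightarrow> mpow (U ** A ** cadj U) k = U ** mpow A k ** cadj U"
  apply (induction k)
   apply (simp add: unitary_def)
  apply (simp add: unitary_conj_mult[symmetric])
  done

lemma mpow_dmat: "mpow (dmat d) k = dmat (\<lambda>i. d i ^ k)"
  by (induction k) (auto simp: dmat_mult dmat_const)

lemma cinner_add_right: "cinner x (y + z) = cinner x y + cinner x z"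
  by (simp add: cinner_def algebra_simps sum.distrib)
lemma cinner_add_left: "cinner (x + y) z = cinner x z + cinner y z"
  by (simp add: cinner_def algebra_simps sum.distrib)
lemma cinner_diff_right: "cinner x (y - z) = cinner x y - cinner x z"
  by (simp add: cinner_def algebra_simps sum_subtractf)
lemma cinner_diff_left: "cinner (x - y) z = cinner x z - cinner y z"
  by (simp add: cinner_def algebra_simps sum_subtractf)
lemma cinner_scale_right: "cinner x (c *s y) = c * cinner x y"
  by (simp add: cinner_def sum_distrib_left algebra_simps)
lemma cinner_scale_left: "cinner (c *s x) y = cnj c * cinner x y"
  by (simp add: cinner_def sum_distrib_left algebra_simps)
lemma cinner_zero_right[simp]: "cinner x 0 = 0"
  by (simp add: cinner_def)
lemma cinner_zero_left[simp]: "cinner 0 x = 0"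
  by (simp add: cinner_def)
lemma cinner_cnj: "cnj (cinner x y) = cinner y x"
  by (simp add: cinner_def mult.commute)
lemma mv_smult: "A *v (c *s x) = c *s (A *v (x::complex^'n::finite))"
  by (simp add: vec_eq_iff mvmult_nth sum_distrib_left algebra_simps)

lemma cinner_sum_right: "finite S \<Longrightarrow> cinner x (\<Sum>i\<in>S. f i) = (\<Sum>i\<in>S. cinner x (f i))"
  by (induction S rule: finite_induct) (auto simp: cinner_add_right)

lemma norm_vec_sq: "(norm (x::complex^'n::finite))\<^sup>2 = (\<Sum>i\<in>UNIV. (norm (x$i))\<^sup>2)"
  by (simp add: norm_vec_def L2_set_def sum_nonneg)

lemma cinner_self: "cinner x x = complex_of_real ((norm x)\<^sup>2)"
  unfolding norm_vec_sq cinner_def of_real_sum complex_norm_square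
  by (simp add: mult.commute)

lemma cinner_self_eq_0: "cinner x x = 0 \<longleftrightarrow> x = 0"
  by (simp add: cinner_self)

lemma cinner_mv: "cinner x (A *v y) = cinner (cadj A *v x) y"
  unfolding cinner_def mvmult_nth
  by (simp add: sum_distrib_left sum_distrib_right mult.assoc mult.left_commute)
     (rule sum.swap)

lemma cinner_mv_herm: "hermitian A \<Longrightarrow> cinner x (A *v y) = cinner (A *v x) y"
  by (simp add: cinner_mv hermitian_def)

lemma norm_smult_vec: "norm (c *s (x::complex^'n::finite)) = norm c * norm x"
proof -
  have "(norm (c *s x))\<^sup>2 = (norm c * norm x)\<^sup>2"
    unfolding norm_vec_sq power_mult_distrib by (simp add: sum_distrib_left norm_mult power_mult_distrib)
  thus ?thesis by (simp add: power2_eq_iff_nonneg)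
qed

lemma quad_le_zero:
  fixes a b :: real
  assumes "\<And>t. 2 * t * a + t\<^sup>2 * b \<le> 0"
  shows "a = 0"
proof -
  define c where "c = \<bar>b\<bar> + 1"
  have c: "c > 0" by (simp add: c_def)
  have "2 * (a / c) * a + (a / c)\<^sup>2 * b \<le> 0" by (rule assms)
  hence "c\<^sup>2 * (2 * (a / c) * a + (a / c)\<^sup>2 * b) \<le> 0"
    by (simp add: mult_nonneg_nonpos)
  also have "c\<^sup>2 * (2 * (a / c) * a + (a / c)\<^sup>2 * b) = a\<^sup>2 * (2 * c + b)"
    using c by (simp add: field_simps power2_eq_square)
  finally have "a\<^sup>2 * (2 * c + b) \<le> 0" .
  moreover have "2 * c + b > 0" unfolding c_def by (cases "b \<ge> 0") auto
  ultimately have "a\<^sup>2 \<le> 0" by (simp add: mult_le_0_iff)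
  thus ?thesis by simp
qed

definition rayl :: "'n::finite cmat \<Rightarrow> complex^'n \<Rightarrow> real" where
  "rayl A x = Re (cinner x (A *v x))"

lemma herm_cinner_real: "hermitian A \<Longrightarrow> cinner x (A *v x) = complex_of_real (rayl A x)"
proof -
  assume h: "hermitian A"
  have "cnj (cinner x (A *v x)) = cinner x (A *v x)"
    by (simp add: cinner_cnj cinner_mv_herm[OF h])
  thus ?thesis unfolding rayl_def
    by (metis Reals_cnj_iff complex_is_Real_iff of_real_Re)
qed

lemma continuous_rayl: "continuous_on S (rayl A)"
  unfolding rayl_def cinner_def mvmult_nth
  by (intro continuous_intros)

lemma continuous_cinner: "continuous_on S (\<lambda>x. cinner u x)"
  unfolding cinner_def by (intro continuous_intros)

lemma exists_eigvec:
  fixes A :: "'n::finite cmat"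
  assumes herm: "hermitian A" and W: "W = {x. \<forall>u\<in>U. cinner u x = 0}"
    and inv: "\<And>x. x \<in> W \<Longrightarrow> A *v x \<in> W" and w: "w \<in> W" "w \<noteq> 0"
  shows "\<exists>v \<mu>. v \<in> W \<and> cinner v v = 1 \<and> A *v v = complex_of_real \<mu> *s v"
proof -
  have Wadd: "x + y \<in> W" if "x \<in> W" "y \<in> W" for x y
    using that by (simp add: W cinner_add_right)
  have Wsc: "c *s x \<in> W" if "x \<in> W" for x c
    using that by (simp add: W cinner_scale_right)
  have Wdiff: "x - y \<in> W" if "x \<in> W" "y \<in> W" for x y
    using that by (simp add: W cinner_diff_right)
  define K where "K = W \<inter> {x. norm x = 1}"
  have closedW: "closed W"
  proof -
    have "W = (\<Inter>u\<in>U. {x. cinner u x = 0})" by (auto simp: W)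
    moreover have "closed {x. cinner u x = 0}" for u
      by (rule closed_Collect_eq) (auto intro: continuous_cinner continuous_intros)
    ultimately show ?thesis by auto
  qed
  have "compact K" unfolding compact_eq_bounded_closed
  proof (intro conjI)
    show "bounded K" unfolding K_def bounded_iff by auto
    show "closed K" unfolding K_def
      by (intro closed_Int closedW closed_Collect_eq) (auto intro: continuous_intros)
  qed
  define w0 where "w0 = complex_of_real (1 / norm w) *s w"
  have "w0 \<in> K" unfolding K_def w0_def using w
    by (auto simp: Wsc norm_smult_vec norm_divide)
  hence "K \<noteq> {}" by auto
  from continuous_attains_sup[OF \<open>compact K\<close> this continuous_rayl]
  obtain v where vK: "v \<in> K" and vmax: "\<And>y. y \<in> K \<Longrightarrow> rayl A y \<le> rayl A v" by blast
  define lam where "lam = rayl A v"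
  have vW: "v \<in> W" and vn: "norm v = 1" using vK by (auto simp: K_def)
  have vv: "cinner v v = 1" using vn by (simp add: cinner_self)
  have rayl_sc: "rayl A (c *s y) = (norm c)\<^sup>2 * rayl A y" for c y
  proof -
    have "cinner (c *s y) (A *v (c *s y)) = (cnj c * c) * cinner y (A *v y)"
      by (simp add: cinner_scale_left cinner_scale_right mv_smult)
    thus ?thesis unfolding rayl_def
      by (simp add: complex_norm_square[symmetric] mult.commute)
  qed
  have bound: "rayl A y \<le> lam * (norm y)\<^sup>2" if "y \<in> W" for y
  proof (cases "y = 0")
    case True thus ?thesis by (simp add: rayl_def)
  next
    case False
    define y0 where "y0 = complex_of_real (1 / norm y) *s y"
    have "y0 \<in> K" unfolding K_def y0_def using that False by (auto simp: Wsc norm_smult_vec norm_divide)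
    hence "rayl A y0 \<le> lam" using vmax lam_def by auto
    moreover have "rayl A y0 = rayl A y / (norm y)\<^sup>2" unfolding y0_def rayl_sc
      by (simp add: power_divide norm_divide)
    ultimately show ?thesis using False by (simp add: field_simps)
  qed
  have key: "Re (cinner x (A *v v)) = 0" if xW: "x \<in> W" and xv: "cinner v x = 0" for x
  proof (rule quad_le_zero)
    fix t :: real
    define y where "y = v + complex_of_real t *s x"
    have yW: "y \<in> W" unfolding y_def by (intro Wadd Wsc vW xW)
    have xv': "cinner x v = 0" using xv by (metis cinner_cnj complex_cnj_zero)
    have e1: "cinner y (A *v y) = cinner v (A *v v) + of_real t * (cinner v (A *v x) + cinner x (A *v v))
        + (of_real t)\<^sup>2 * cinner x (A *v x)"
    proof -
      have Ay: "A *v y = A *v v + of_real t *s (A *v x)"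
        by (simp add: y_def matrix_vector_right_distrib mv_smult)
      show ?thesis unfolding Ay unfolding y_def
        by (simp only: cinner_add_left cinner_add_right cinner_scale_left cinner_scale_right complex_cnj_complex_of_real)
           (simp add: power2_eq_square distrib_left add.assoc)
    qed
    have e2: "cinner v (A *v x) = cnj (cinner x (A *v v))"
      by (simp add: cinner_cnj cinner_mv_herm[OF herm])
    have "rayl A y = lam + 2 * t * Re (cinner x (A *v v)) + t\<^sup>2 * rayl A x"
      unfolding rayl_def e1 e2 lam_def by (simp add: power2_eq_square)
    moreover have "(norm y)\<^sup>2 = 1 + t\<^sup>2 * (norm x)\<^sup>2"
    proof -
      have "cinner y y = 1 + (of_real t)\<^sup>2 * cinner x x"
        unfolding y_def by (simp add: cinner_add_left cinner_add_right cinner_scale_left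
            cinner_scale_right vv xv xv' power2_eq_square)
      hence "complex_of_real ((norm y)\<^sup>2) = complex_of_real (1 + t\<^sup>2 * (norm x)\<^sup>2)"
        unfolding cinner_self by simp
      thus ?thesis by (simp only: of_real_eq_iff)
    qed
    ultimately have "lam + 2 * t * Re (cinner x (A *v v)) + t\<^sup>2 * rayl A x \<le> lam * (1 + t\<^sup>2 * (norm x)\<^sup>2)"
      using bound[OF yW] by simp
    thus "2 * t * Re (cinner x (A *v v)) + t\<^sup>2 * (rayl A x - lam * (norm x)\<^sup>2) \<le> 0"
      by (simp add: algebra_simps)
  qed
  define mu where "mu = cinner v (A *v v)"
  define w1 where "w1 = A *v v - mu *s v"
  have w1W: "w1 \<in> W" unfolding w1_def by (intro Wdiff Wsc inv vW)
  have w1v: "cinner v w1 = 0" unfolding w1_def mu_def by (simp add: cinner_diff_right cinner_scale_right vv)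
  have a1: "Re (cinner w1 (A *v v)) = 0" by (rule key[OF w1W w1v])
  have a2: "Re (cinner (\<i> *s w1) (A *v v)) = 0"
    by (rule key) (auto simp: Wsc w1W cinner_scale_right w1v)
  have "cinner w1 (A *v v) = 0"
    using a1 a2 by (simp add: cinner_scale_left complex_eq_iff)
  moreover have "cinner w1 v = 0" using w1v by (metis cinner_cnj complex_cnj_zero)
  ultimately have "cinner w1 w1 = 0"
  proof -
    assume a: "cinner w1 (A *v v) = 0" "cinner w1 v = 0"
    have "cinner w1 w1 = cinner w1 (A *v v) - mu * cinner w1 v"
      unfolding w1_def[symmetric] by (subst (2) w1_def) (simp only: cinner_diff_right cinner_scale_right)
    thus ?thesis using a by simp
  qed
  hence "w1 = 0" by (simp add: cinner_self_eq_0)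
  hence "A *v v = mu *s v" by (simp add: w1_def)
  moreover have "mu = complex_of_real (rayl A v)" unfolding mu_def by (rule herm_cinner_real[OF herm])
  ultimately show ?thesis using vW vv by blast
qed

definition orthonormal_list :: "(complex^'n::finite) list \<Rightarrow> bool" where
  "orthonormal_list vs \<longleftrightarrow> (\<forall>i<length vs. \<forall>j<length vs. cinner (vs!i) (vs!j) = (if i = j then 1 else 0))"

lemma exists_orth_vec:
  fixes vs :: "(complex^'n::finite) list"
  assumes on: "orthonormal_list vs" and len: "length vs < CARD('n)"
  shows "\<exists>w. w \<noteq> 0 \<and> (\<forall>u\<in>set vs. cinner u w = 0)"
proof (rule ccontr)
  assume contra: "\<not> ?thesis"
  define k where "k = length vs"
  have "x \<in> vec.span (set vs)" for x
  proof -
    define p where "p = (\<Sum>i<k. cinner (vs!i) x *s vs!i)"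
    have "cinner u (x - p) = 0" if "u \<in> set vs" for u
    proof -
      obtain j where j: "j < k" "u = vs!j" using \<open>u \<in> set vs\<close> by (auto simp: in_set_conv_nth k_def)
      have "cinner u p = (\<Sum>i<k. cinner (vs!i) x * cinner (vs!j) (vs!i))"
        unfolding p_def j by (simp add: cinner_sum_right cinner_scale_right)
      also have "\<dots> = (\<Sum>i<k. if i = j then cinner (vs!j) x else 0)"
        using on j unfolding orthonormal_list_def k_def by (intro sum.cong) auto
      also have "\<dots> = cinner u x" using j by simp
      finally show ?thesis by (simp add: cinner_diff_right)
    qed
    with contra have "x - p = 0" by blast
    hence "x = p" by simp
    moreover have "p \<in> vec.span (set vs)" unfolding p_def
      by (intro vec.span_sum vec.span_scale vec.span_base) (auto simp: k_def)
    ultimately show ?thesis by simp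
  qed
  hence "UNIV \<subseteq> vec.span (set vs)" by auto
  hence "vec.dim (UNIV :: (complex^'n) set) \<le> card (set vs)"
    by (intro vec.dim_le_card) auto
  also have "\<dots> \<le> length vs" by (rule card_length)
  finally show False using len vec_dim_card[where 'a=complex and 'n='n] by simp
qed

lemma orthonormal_eigs:
  fixes A :: "'n::finite cmat"
  assumes herm: "hermitian A"
  shows "k \<le> CARD('n) \<Longrightarrow> \<exists>vs mu. length vs = k \<and> orthonormal_list vs \<and>
           (\<forall>i<k. A *v (vs!i) = complex_of_real (mu i) *s vs!i)"
proof (induction k)
  case 0 thus ?case by (auto simp: orthonormal_list_def)
next
  case (Suc k)
  then obtain vs mu where vs: "length vs = k" "orthonormal_list vs"
    "\<And>i. i<k \<Longrightarrow> A *v (vs!i) = complex_of_real (mu i) *s vs!i" by auto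
  define W where "W = {x. \<forall>u\<in>set vs. cinner u x = 0}"
  obtain w where w: "w \<noteq> 0" "\<forall>u\<in>set vs. cinner u w = 0"
    using exists_orth_vec[OF vs(2)] vs(1) Suc.prems by auto
  have inv: "A *v x \<in> W" if "x \<in> W" for x
  proof -
    have "cinner u (A *v x) = 0" if "u \<in> set vs" for u
    proof -
      obtain j where j: "j < k" "u = vs!j" using \<open>u \<in> set vs\<close> vs(1) by (auto simp: in_set_conv_nth)
      have "cinner u (A *v x) = cinner (A *v u) x" by (rule cinner_mv_herm[OF herm])
      also have "\<dots> = cnj (complex_of_real (mu j)) * cinner u x"
        using vs(3)[OF j(1)] j(2) by (simp add: cinner_scale_left)
      also have "\<dots> = 0" using \<open>x \<in> W\<close> that by (simp add: W_def)
      finally show ?thesis .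
    qed
    thus ?thesis by (simp add: W_def)
  qed
  obtain v m where v: "v \<in> W" "cinner v v = 1" "A *v v = complex_of_real m *s v"
    using exists_eigvec[OF herm W_def inv, of w] w by (auto simp: W_def)
  define vs' where "vs' = vs @ [v]"
  define mu' where "mu' = mu(k := m)"
  have "orthonormal_list vs'"
    unfolding orthonormal_list_def
  proof (intro allI impI)
    fix i j assume ij: "i < length vs'" "j < length vs'"
    show "cinner (vs'!i) (vs'!j) = (if i = j then 1 else 0)"
    proof (cases "i < k")
      case i: True
      show ?thesis
      proof (cases "j < k")
        case True thus ?thesis using i vs ij unfolding vs'_def orthonormal_list_def by (simp add: nth_append)
      next
        case False hence "j = k" using ij vs(1) by (simp add: vs'_def)
        thus ?thesis using i v(1) vs(1) by (auto simp: vs'_def nth_append W_def)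
      qed
    next
      case False hence ik: "i = k" using ij vs(1) by (simp add: vs'_def)
      show ?thesis
      proof (cases "j < k")
        case True
        have "cinner (vs!j) v = 0" using v(1) True vs(1) by (auto simp: W_def)
        hence "cinner v (vs!j) = 0" using cinner_cnj[of "vs!j" v] by simp
        thus ?thesis using True ik vs(1) by (simp add: vs'_def nth_append)
      next
        case False hence "j = k" using ij vs(1) by (simp add: vs'_def)
        thus ?thesis using ik v(2) vs(1) by (simp add: vs'_def nth_append)
      qed
    qed
  qed
  moreover have "A *v (vs'!i) = complex_of_real (mu' i) *s vs'!i" if "i < Suc k" for i
    using that vs v by (cases "i < k") (auto simp: vs'_def mu'_def nth_append)
  moreover have "length vs' = Suc k" using vs by (simp add: vs'_def)
  ultimately show ?case by blast
qed

theorem spectral: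
  fixes A :: "'n::finite cmat"
  assumes herm: "hermitian A"
  shows "\<exists>U d. unitary U \<and> A = U ** dmat (\<lambda>i. complex_of_real (d i)) ** cadj U"
proof -
  obtain vs mu where vs: "length vs = CARD('n)" "orthonormal_list vs"
    "\<And>i. i < CARD('n) \<Longrightarrow> A *v (vs!i) = complex_of_real (mu i) *s vs!i"
    using orthonormal_eigs[OF herm, of "CARD('n)"] by auto
  obtain idx :: "'n \<Rightarrow> nat" where idx: "bij_betw idx UNIV {0..<CARD('n)}"
    using ex_bij_betw_finite_nat[of "UNIV :: 'n set"] by auto
  have idxl: "idx i < CARD('n)" for i using idx by (auto simp: bij_betw_def)
  have idxi: "idx i = idx j \<longleftrightarrow> i = j" for i j using idx by (auto simp: bij_betw_def inj_on_def)
  define U :: "'n cmat" where "U = (\<chi> i j. vs ! idx j $ i)"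
  define d where "d j = mu (idx j)" for j
  have "cadj U ** U = mat 1"
  proof -
    have "(cadj U ** U) $ i $ j = cinner (vs ! idx i) (vs ! idx j)" for i j
      by (simp add: mmult_nth U_def cinner_def)
    also have "cinner (vs ! idx i) (vs ! idx j) = mat 1 $ i $ j" for i j
      using vs(1,2) idxl idxi unfolding orthonormal_list_def by (simp add: mat_nth)
    finally show ?thesis by (simp add: vec_eq_iff)
  qed
  hence U: "unitary U" by (rule unitary_left)
  have "A ** U = U ** dmat (\<lambda>i. complex_of_real (d i))"
  proof -
    have "(A ** U) $ i $ j = (A *v (vs ! idx j)) $ i" for i j
      by (simp add: mmult_nth mvmult_nth U_def)
    also have "(A *v (vs ! idx j)) $ i = (U ** dmat (\<lambda>i. complex_of_real (d i))) $ i $ j" for i j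
      using vs(3)[OF idxl[of j]] by (simp add: dmat_mult_right U_def d_def mult.commute)
    finally show ?thesis by (simp add: vec_eq_iff)
  qed
  hence "A ** U ** cadj U = U ** dmat (\<lambda>i. complex_of_real (d i)) ** cadj U" by simp
  hence "A = U ** dmat (\<lambda>i. complex_of_real (d i)) ** cadj U"
    using U by (simp add: unitary_def matrix_mul_assoc[symmetric])
  thus ?thesis using U by blast
qed

lemma sums_mat:
  fixes c :: "nat \<Rightarrow> 'n::finite cmat"
  assumes "\<And>i j. (\<lambda>k. c k $ i $ j) sums (s $ i $ j)"
  shows "c sums s"
proof -
  have eq: "(\<Sum>k<n. c k) = (\<chi> i j. \<Sum>k<n. c k $ i $ j)" for n
    by (simp add: vec_eq_iff)
  have "(\<lambda>n. \<chi> i j. \<Sum>k<n. c k $ i $ j) \<longlonglongrightarrow> (\<chi> i j. s $ i $ j)"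
    using assms unfolding sums_def by (intro tendsto_vec_lambda) 
  thus ?thesis unfolding sums_def eq by simp
qed

definition spec :: "'n::finite cmat \<Rightarrow> ('n \<Rightarrow> real) \<Rightarrow> 'n cmat" where
  "spec U d = U ** dmat (\<lambda>i. complex_of_real (d i)) ** cadj U"

lemma spec_mult: "unitary U \<Longrightarrow> spec U a ** spec U b = spec U (\<lambda>i. a i * b i)"
  unfolding spec_def by (simp add: unitary_conj_mult dmat_mult)

lemma spec_add: "spec U a + spec U b = spec U (\<lambda>i. a i + b i)"
  unfolding spec_def by (simp add: mult_add_left mult_add_right dmat_add[symmetric])

lemma spec_diff: "spec U a - spec U b = spec U (\<lambda>i. a i - b i)"
  unfolding spec_def by (simp add: mult_diff_left mult_diff_right dmat_diff[symmetric])

lemma spec_scaleR: "r *\<^sub>R spec U a = spec U (\<lambda>i. r * a i)"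
proof -
  have "dmat (\<lambda>i. complex_of_real (r * a i)) = r *\<^sub>R dmat (\<lambda>i. complex_of_real (a i))"
    unfolding dmat_scaleR by (rule arg_cong[where f=dmat]) (simp add: fun_eq_iff of_real_def)
  thus ?thesis unfolding spec_def by (simp add: scaleR_mult_left scaleR_mult_right)
qed

lemma spec_uminus: "- spec U a = spec U (\<lambda>i. - a i)"
  using spec_scaleR[of "-1" U a] by simp


lemma mat_scaleR: "mat (complex_of_real c) = c *\<^sub>R (mat 1 :: 'n::finite cmat)"
  by (simp add: vec_eq_iff mat_nth of_real_def)

lemma spec_const: "unitary U \<Longrightarrow> spec U (\<lambda>i. c) = mat (complex_of_real c)"
  unfolding spec_def dmat_const mat_scaleR
  by (simp add: scaleR_mult_left scaleR_mult_right unitary_def)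

lemma spec_one: "unitary U \<Longrightarrow> spec U (\<lambda>i. 1) = mat 1"
  using spec_const[of U 1] by simp

lemma hermitian_spec: "hermitian (spec U d)"
  unfolding spec_def by (intro hermitian_conj hermitian_dmat_real)

lemma trace_spec: "unitary U \<Longrightarrow> trace (spec U d) = complex_of_real (\<Sum>i\<in>UNIV. d i)"
  unfolding spec_def by (simp add: trace_conj trace_dmat)

lemma bounded_linear_conj: "bounded_linear (\<lambda>M::'n::finite cmat. (U::'n cmat) ** M ** (V::'n::finite cmat))"
proof -
  have "linear (\<lambda>M::'n::finite cmat. (U::'n cmat) ** M ** (V::'n::finite cmat))"
    by (rule linearI) (simp_all add: mult_add_left mult_add_right scaleR_mult_left scaleR_mult_right)
  thus ?thesis by (simp add: linear_conv_bounded_linear)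
qed

lemma mexp_series_dmat:
  "(\<lambda>k. (1 / fact k) *\<^sub>R mpow (dmat (\<lambda>i. complex_of_real (d i))) k)
     sums dmat (\<lambda>i. complex_of_real (exp (d i)))"
proof (rule sums_mat)
  fix i j
  show "(\<lambda>k. ((1 / fact k) *\<^sub>R mpow (dmat (\<lambda>i. complex_of_real (d i))) k) $ i $ j) sums
          (dmat (\<lambda>i. complex_of_real (exp (d i))) $ i $ j)"
  proof (cases "i = j")
    case True
    have "(\<lambda>k. (complex_of_real (d i))^k /\<^sub>R fact k) sums exp (complex_of_real (d i))"
      by (rule exp_converges)
    moreover have "(\<lambda>k. ((1 / fact k) *\<^sub>R mpow (dmat (\<lambda>i. complex_of_real (d i))) k) $ i $ j)
        = (\<lambda>k. (complex_of_real (d i))^k /\<^sub>R fact k)"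
      using True by (simp add: mpow_dmat dmat_nth inverse_eq_divide)
    ultimately show ?thesis using True by (simp add: dmat_nth exp_of_real)
  next
    case False thus ?thesis by (simp add: mpow_dmat dmat_nth)
  qed
qed

lemma mexp_series_spec:
  assumes U: "unitary U"
  shows "(\<lambda>k. (1 / fact k) *\<^sub>R mpow (spec U d) k) sums spec U (\<lambda>i. exp (d i))"
proof -
  have "(\<lambda>k. U ** ((1 / fact k) *\<^sub>R mpow (dmat (\<lambda>i. complex_of_real (d i))) k) ** cadj U)
       sums (U ** dmat (\<lambda>i. complex_of_real (exp (d i))) ** cadj U)"
    by (rule bounded_linear.sums[OF bounded_linear_conj mexp_series_dmat])
  thus ?thesis unfolding spec_def using U
    by (simp add: mpow_conj scaleR_mult_left scaleR_mult_right)
qed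

lemma mexp_spec: "unitary U \<Longrightarrow> mexp (spec U d) = spec U (\<lambda>i. exp (d i))"
  unfolding mexp_def using mexp_series_spec sums_unique by metis

lemma spec_eq_dmat: "unitary U \<Longrightarrow> cadj U ** spec U d ** U = dmat (\<lambda>i. complex_of_real (d i))"
  unfolding spec_def unitary_def by (simp add: matrix_mul_assoc)
    (metis matrix_mul_assoc matrix_mul_lid matrix_mul_rid)

lemma mexp_inj_herm:
  assumes L1: "hermitian L1" and L2: "hermitian L2" and eq: "mexp L1 = mexp L2"
  shows "L1 = L2"
proof -
  obtain U a where U: "unitary U" and a: "L1 = spec U a" using spectral[OF L1] unfolding spec_def by blast
  obtain V b where V: "unitary V" and b: "L2 = spec V b" using spectral[OF L2] unfolding spec_def by blast
  define W where "W = cadj V ** U"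
  have e: "spec U (\<lambda>i. exp (a i)) = spec V (\<lambda>i. exp (b i))"
    using eq unfolding a b by (simp add: mexp_spec U V)
  have key: "W ** dmat (\<lambda>i. complex_of_real (exp (a i))) = dmat (\<lambda>i. complex_of_real (exp (b i))) ** W"
  proof -
    have "cadj V ** spec U (\<lambda>i. exp (a i)) ** U = cadj V ** spec V (\<lambda>i. exp (b i)) ** U"
      using e by simp
    moreover have "cadj V ** spec U (\<lambda>i. exp (a i)) ** U = W ** dmat (\<lambda>i. complex_of_real (exp (a i)))"
      unfolding spec_def W_def using U unfolding unitary_def
      by (metis matrix_mul_assoc matrix_mul_rid)
    moreover have "cadj V ** spec V (\<lambda>i. exp (b i)) ** U = dmat (\<lambda>i. complex_of_real (exp (b i))) ** W"
      unfolding spec_def W_def using V unfolding unitary_def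
      by (metis matrix_mul_assoc matrix_mul_lid)
    ultimately show ?thesis by simp
  qed
  have key2: "W ** dmat (\<lambda>i. complex_of_real (a i)) = dmat (\<lambda>i. complex_of_real (b i)) ** W"
  proof -
    have "W $ i $ j * complex_of_real (a j) = complex_of_real (b i) * W $ i $ j" for i j
    proof -
      have "W $ i $ j * complex_of_real (exp (a j)) = complex_of_real (exp (b i)) * W $ i $ j"
        using arg_cong[OF key, of "\<lambda>M. M $ i $ j"] by (simp add: dmat_mult_left dmat_mult_right)
      hence "W $ i $ j = 0 \<or> exp (a j) = exp (b i)"
        by (metis mult.commute mult_cancel_left of_real_eq_iff)
      thus ?thesis by auto
    qed
    thus ?thesis by (simp add: vec_eq_iff dmat_mult_left dmat_mult_right)
  qed
  have "L1 = V ** W ** dmat (\<lambda>i. complex_of_real (a i)) ** cadj U"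
    unfolding a spec_def W_def using V unfolding unitary_def
    by (metis matrix_mul_assoc matrix_mul_lid)
  also have "\<dots> = V ** dmat (\<lambda>i. complex_of_real (b i)) ** W ** cadj U"
    using key2 by (metis matrix_mul_assoc)
  also have "\<dots> = L2"
    unfolding b spec_def W_def using U unfolding unitary_def
    by (metis matrix_mul_assoc matrix_mul_rid)
  finally show ?thesis .
qed

lemma mlog_eq: "hermitian L \<Longrightarrow> mexp L = A \<Longrightarrow> mlog A = L"
  unfolding mlog_def by (rule the_equality) (auto intro: mexp_inj_herm)

lemma mlog_spec: "unitary U \<Longrightarrow> (\<And>i. p i > 0) \<Longrightarrow> mlog (spec U p) = spec U (\<lambda>i. ln (p i))"
  by (rule mlog_eq) (simp_all add: hermitian_spec mexp_spec)

lemma mlog_hermitian: "unitary U \<Longrightarrow> (\<And>i. p i > 0) \<Longrightarrow> hermitian (mlog (spec U p))"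
  by (simp add: mlog_spec hermitian_spec)

lemma mexp_mlog: "unitary U \<Longrightarrow> (\<And>i. p i > 0) \<Longrightarrow> mexp (mlog (spec U p)) = spec U p"
  by (simp add: mlog_spec mexp_spec)

lemma dmat_mv: "(dmat d *v w) $ i = d i * w $ i"
proof -
  have "(dmat d *v w) $ i = (\<Sum>k\<in>UNIV. if k = i then d i * w $ i else 0)"
    unfolding mvmult_nth dmat_nth by (rule sum.cong) auto
  thus ?thesis by simp
qed

lemma spec_left: "unitary U \<Longrightarrow> cadj U ** spec U d = dmat (\<lambda>i. complex_of_real (d i)) ** cadj U"
  unfolding spec_def unitary_def by (metis matrix_mul_assoc matrix_mul_lid)

lemma spec_right: "unitary U \<Longrightarrow> spec U d ** U = U ** dmat (\<lambda>i. complex_of_real (d i))"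
  unfolding spec_def unitary_def by (metis matrix_mul_assoc matrix_mul_rid)

lemma scaleR_mv: "(r *\<^sub>R A) *v x = complex_of_real r *s (A *v (x::complex^'n::finite))"
proof -
  have c: "(r *\<^sub>R A) $ i $ k = complex_of_real r * A $ i $ k" for i k
  proof -
    have "(r *\<^sub>R A) $ i $ k = r *\<^sub>R (A $ i $ k)" by simp
    also have "\<dots> = complex_of_real r * A $ i $ k" by (simp add: scaleR_conv_of_real)
    finally show ?thesis .
  qed
  show ?thesis by (simp add: vec_eq_iff mvmult_nth sum_distrib_left) (simp add: scaleR_conv_of_real mult.assoc)
qed

lemma spec_zero: "spec U (\<lambda>i. 0) = 0"
  unfolding spec_def by simp

lemma spec_sum: "finite S \<Longrightarrow> (\<Sum>x\<in>S. spec U (f x)) = spec U (\<lambda>i. \<Sum>x\<in>S. f x i)"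
  by (induction S rule: finite_induct) (auto simp: spec_zero spec_add)

lemma matrix_eq_mv: "(\<And>x. A *v x = B *v x) \<Longrightarrow> (A::'n::finite cmat) = B"
  using matrix_eq by blast

lemma orth_proj_unique:
  assumes P: "orth_proj P" and Q: "orth_proj Q" and r: "range ((*v) P) = range ((*v) (Q::'n::finite cmat))"
  shows "P = Q"
proof -
  have PQ: "P ** Q = Q" if P: "orth_proj P" and Q: "orth_proj Q" and r: "range ((*v) P) = range ((*v) (Q::'n cmat))" for P Q
  proof (rule matrix_eq_mv)
    fix x
    have "Q *v x \<in> range ((*v) P)" using r by auto
    then obtain y where y: "Q *v x = P *v y" by auto
    have "(P ** Q) *v x = P *v (P *v y)" by (simp add: matrix_vector_mul_assoc[symmetric] y)
    also have "\<dots> = P *v y" using P by (simp add: matrix_vector_mul_assoc orth_proj_def)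
    finally show "(P ** Q) *v x = Q *v x" using y by simp
  qed
  have 1: "P ** Q = Q" by (rule PQ[OF P Q r])
  have 2: "Q ** P = P" by (rule PQ[OF Q P r[symmetric]])
  have "P = cadj P" using P by (simp add: orth_proj_def hermitian_def)
  also have "\<dots> = cadj (Q ** P)" using 2 by simp
  also have "\<dots> = P ** Q" using P Q by (simp add: cadj_mult orth_proj_def hermitian_def)
  finally show ?thesis using 1 by simp
qed

definition Ev :: "('n::finite \<Rightarrow> real) \<Rightarrow> complex set" where
  "Ev e0 = (\<lambda>i. complex_of_real (e0 i)) ` UNIV"

definition chi :: "('n::finite \<Rightarrow> real) \<Rightarrow> complex \<Rightarrow> 'n \<Rightarrow> real" where
  "chi e0 e j = (if complex_of_real (e0 j) = e then 1 else 0)"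

definition pj :: "'n::finite cmat \<Rightarrow> ('n \<Rightarrow> real) \<Rightarrow> complex \<Rightarrow> 'n cmat" where
  "pj V e0 e = spec V (chi e0 e)"

lemma finite_Ev[simp]: "finite (Ev e0)"
  by (simp add: Ev_def)

lemma eigenvalues_spec:
  assumes V: "unitary V"
  shows "eigenvalues (spec V e0) = Ev e0"
proof
  show "eigenvalues (spec V e0) \<subseteq> Ev e0"
  proof
    fix e assume "e \<in> eigenvalues (spec V e0)"
    then obtain v where v: "v \<noteq> 0" "spec V e0 *v v = e *s v" by (auto simp: eigenvalues_def)
    define w where "w = cadj V *v v"
    have "V *v w = v" using V by (simp add: w_def matrix_vector_mul_assoc unitary_def)
    hence "w \<noteq> 0" using v by auto
    then obtain i where i: "w $ i \<noteq> 0" by (auto simp: vec_eq_iff)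
    have "dmat (\<lambda>i. complex_of_real (e0 i)) *v w = (cadj V ** spec V e0) *v v"
      by (simp add: spec_left[OF V] w_def matrix_vector_mul_assoc)
    also have "\<dots> = e *s w" by (simp add: matrix_vector_mul_assoc[symmetric] v w_def mv_smult)
    finally have "complex_of_real (e0 i) * w $ i = e * w $ i"
      by (metis dmat_mv vector_smult_component)
    hence "e = complex_of_real (e0 i)" using i by simp
    thus "e \<in> Ev e0" by (simp add: Ev_def)
  qed
  show "Ev e0 \<subseteq> eigenvalues (spec V e0)"
  proof
    fix e assume "e \<in> Ev e0"
    then obtain i where e: "e = complex_of_real (e0 i)" by (auto simp: Ev_def)
    define v where "v = V *v axis i 1"
    have "cadj V *v v = axis i 1" using V by (simp add: v_def matrix_vector_mul_assoc unitary_def)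
    hence "v \<noteq> 0"
    proof (intro notI)
      assume "cadj V *v v = axis i 1" "v = 0"
      hence "axis i (1::complex) $ i = 0" by simp
      thus False by (simp add: axis_def)
    qed
    moreover have "spec V e0 *v v = e *s v"
    proof -
      have "spec V e0 *v v = V *v (dmat (\<lambda>i. complex_of_real (e0 i)) *v axis i 1)"
        by (simp add: v_def matrix_vector_mul_assoc spec_right[OF V])
      also have "dmat (\<lambda>i. complex_of_real (e0 i)) *v axis i 1 = e *s axis i 1"
        by (simp add: vec_eq_iff dmat_mv e axis_def)
      finally show ?thesis by (simp add: mv_smult v_def)
    qed
    ultimately show "e \<in> eigenvalues (spec V e0)" by (auto simp: eigenvalues_def)
  qed
qed

lemma chi_sq: "chi e0 e j * chi e0 e j = chi e0 e j"
  by (simp add: chi_def)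

lemma pj_idem: "unitary V \<Longrightarrow> pj V e0 e ** pj V e0 e = pj V e0 e"
  unfolding pj_def by (simp add: spec_mult chi_sq)

lemma pj_orth: "unitary V \<Longrightarrow> e \<noteq> f \<Longrightarrow> pj V e0 e ** pj V e0 f = 0"
proof -
  assume V: "unitary V" and ef: "e \<noteq> f"
  have "(\<lambda>i. chi e0 e i * chi e0 f i) = (\<lambda>i. 0)" using ef by (auto simp: chi_def fun_eq_iff)
  thus ?thesis unfolding pj_def by (simp add: spec_mult[OF V] spec_zero)
qed

lemma pj_herm: "hermitian (pj V e0 e)"
  unfolding pj_def by (rule hermitian_spec)

lemma orth_proj_pj: "unitary V \<Longrightarrow> orth_proj (pj V e0 e)"
  by (simp add: orth_proj_def pj_idem pj_herm)

lemma sum_pj: "unitary V \<Longrightarrow> (\<Sum>e\<in>Ev e0. pj V e0 e) = mat 1"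
proof -
  assume V: "unitary V"
  have "(\<Sum>e\<in>Ev e0. chi e0 e j) = 1" for j
  proof -
    have "(\<Sum>e\<in>Ev e0. chi e0 e j) = (\<Sum>e\<in>Ev e0. if e = complex_of_real (e0 j) then 1 else 0)"
      unfolding chi_def by (rule sum.cong) auto
    also have "\<dots> = 1" by (simp add: Ev_def)
    finally show ?thesis .
  qed
  thus ?thesis unfolding pj_def by (simp add: spec_sum spec_one V)
qed

lemma eigenproj_spec:
  assumes V: "unitary V" and e: "e \<in> Ev e0"
  shows "eigenproj (spec V e0) e = pj V e0 e"
proof -
  obtain i where ei: "e = complex_of_real (e0 i)" using e by (auto simp: Ev_def)
  have Hpj: "spec V e0 ** pj V e0 e = Re e *\<^sub>R pj V e0 e"
    unfolding pj_def spec_mult[OF V] spec_scaleR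
    by (rule arg_cong[where f="spec V"]) (auto simp: fun_eq_iff chi_def ei)
  have R: "range ((*v) (pj V e0 e)) = {v. spec V e0 *v v = e *s v}"
  proof
    show "range ((*v) (pj V e0 e)) \<subseteq> {v. spec V e0 *v v = e *s v}"
    proof clarify
      fix x
      have "spec V e0 *v (pj V e0 e *v x) = (Re e *\<^sub>R pj V e0 e) *v x"
        by (simp add: matrix_vector_mul_assoc Hpj)
      also have "\<dots> = e *s (pj V e0 e *v x)"
        by (simp add: scaleR_mv ei)
      finally show "spec V e0 *v (pj V e0 e *v x) = e *s (pj V e0 e *v x)" .
    qed
    show "{v. spec V e0 *v v = e *s v} \<subseteq> range ((*v) (pj V e0 e))"
    proof clarify
      fix v assume v: "spec V e0 *v v = e *s v"
      define w where "w = cadj V *v v"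
      have Vw: "V *v w = v" using V by (simp add: w_def matrix_vector_mul_assoc unitary_def)
      have dw: "dmat (\<lambda>i. complex_of_real (e0 i)) *v w = e *s w"
      proof -
        have "dmat (\<lambda>i. complex_of_real (e0 i)) *v w = (cadj V ** spec V e0) *v v"
          by (simp add: spec_left[OF V] w_def matrix_vector_mul_assoc)
        also have "\<dots> = e *s w" by (simp add: matrix_vector_mul_assoc[symmetric] v w_def mv_smult)
        finally show ?thesis .
      qed
      have "dmat (\<lambda>j. complex_of_real (chi e0 e j)) *v w = w"
      proof -
        have "complex_of_real (chi e0 e j) * w $ j = w $ j" for j
        proof -
          have "complex_of_real (e0 j) * w $ j = e * w $ j"
            using arg_cong[OF dw, of "\<lambda>u. u $ j"] by (simp add: dmat_mv)
          thus ?thesis by (auto simp: chi_def)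
        qed
        thus ?thesis by (simp add: vec_eq_iff dmat_mv)
      qed
      hence "pj V e0 e *v v = v"
        unfolding pj_def spec_def
        by (simp add: matrix_vector_mul_assoc[symmetric] w_def[symmetric] Vw)
      thus "v \<in> range ((*v) (pj V e0 e))" by (metis rangeI)
    qed
  qed
  show ?thesis unfolding eigenproj_def
  proof (rule the_equality)
    show "orth_proj (pj V e0 e) \<and> range ((*v) (pj V e0 e)) = {v. spec V e0 *v v = e *s v}"
      using orth_proj_pj[OF V] R by simp
    fix P assume P: "orth_proj P \<and> range ((*v) P) = {v. spec V e0 *v v = e *s v}"
    show "P = pj V e0 e"
      by (rule orth_proj_unique) (use P R orth_proj_pj[OF V] in auto)
  qed
qed

lemma matrix_vector_mult_sum_rdistrib: "finite S \<Longrightarrow> (\<Sum>e\<in>S. f e) *v x = (\<Sum>e\<in>S. f e *v (x::complex^'n::finite))"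
  by (induction S rule: finite_induct) (auto simp: matrix_vector_mult_add_rdistrib)

lemma pinch_spec:
  assumes V: "unitary V"
  shows "pinch (spec V e0) X = (\<Sum>e\<in>Ev e0. pj V e0 e ** X ** pj V e0 e)"
  unfolding pinch_def eigenvalues_spec[OF V]
  by (rule sum.cong) (simp_all add: eigenproj_spec[OF V])

context
  fixes V :: "'n::finite cmat" and e0 :: "'n \<Rightarrow> real"
  assumes V: "unitary V"
begin

abbreviation "PP e \<equiv> pj V e0 e"
abbreviation "pin X \<equiv> pinch (spec V e0) X"

lemma pin_add: "pin (X + Y) = pin X + pin Y"
  unfolding pinch_spec[OF V] by (simp add: mult_add_left mult_add_right sum.distrib)

lemma pin_scaleR: "pin (r *\<^sub>R X) = r *\<^sub>R pin X"
  unfolding pinch_spec[OF V] by (simp add: scaleR_mult_left scaleR_mult_right scaleR_sum_right)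

lemma pin_uminus: "pin (- X) = - pin X"
  using pin_scaleR[of "-1" X] by simp

lemma pin_diff: "pin (X - Y) = pin X - pin Y"
  using pin_add[of X "- Y"] pin_uminus[of Y] by simp

lemma bounded_linear_pin: "bounded_linear pin"
  unfolding pinch_spec[OF V]
  by (intro bounded_linear_sum bounded_linear_conj)

lemma trace_pin: "trace (pin X) = trace X"
proof -
  have "trace (pin X) = (\<Sum>e\<in>Ev e0. trace (PP e ** X ** PP e))"
    unfolding pinch_spec[OF V] by (simp add: trace_sum)
  also have "\<dots> = (\<Sum>e\<in>Ev e0. trace (PP e ** X))"
    by (rule sum.cong) (simp_all add: trace_mul_sym[of "PP _ ** X"] matrix_mul_assoc pj_idem[OF V])
  also have "\<dots> = trace ((\<Sum>e\<in>Ev e0. PP e) ** X)"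
    by (simp add: mult_sum_left trace_sum)
  finally show ?thesis by (simp add: sum_pj[OF V])
qed

lemma trace_pin_mult: "trace (pin X ** Y) = trace (X ** pin Y)"
proof -
  have "trace (pin X ** Y) = (\<Sum>e\<in>Ev e0. trace (PP e ** X ** PP e ** Y))"
    unfolding pinch_spec[OF V] by (simp add: trace_sum mult_sum_left)
  also have "\<dots> = (\<Sum>e\<in>Ev e0. trace (X ** (PP e ** Y ** PP e)))"
  proof (rule sum.cong)
    fix e
    have "trace (PP e ** X ** PP e ** Y) = trace (PP e ** (X ** PP e ** Y))" by (simp add: matrix_mul_assoc)
    also have "\<dots> = trace ((X ** PP e ** Y) ** PP e)" by (rule trace_mul_sym)
    also have "\<dots> = trace (X ** (PP e ** Y ** PP e))" by (simp add: matrix_mul_assoc)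
    finally show "trace (PP e ** X ** PP e ** Y) = trace (X ** (PP e ** Y ** PP e))" .
  qed simp
  also have "\<dots> = trace (X ** pin Y)"
    unfolding pinch_spec[OF V] by (simp add: trace_sum mult_sum_right)
  finally show ?thesis .
qed

lemma herm_pin: "hermitian X \<Longrightarrow> hermitian (pin X)"
  unfolding pinch_spec[OF V]
  by (intro hermitian_sum) (auto simp: hermitian_def cadj_mult matrix_mul_assoc pj_herm[unfolded hermitian_def])

lemma pj_pin: "PP f ** pin X = PP f ** X ** PP f"
proof -
  have "PP f ** pin X = (\<Sum>e\<in>Ev e0. PP f ** PP e ** X ** PP e)"
    unfolding pinch_spec[OF V] by (simp add: mult_sum_right matrix_mul_assoc)
  also have "\<dots> = (\<Sum>e\<in>Ev e0. if e = f then PP f ** X ** PP f else 0)"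
    by (rule sum.cong) (auto simp: pj_idem[OF V] pj_orth[OF V])
  also have "\<dots> = (if f \<in> Ev e0 then PP f ** X ** PP f else 0)"
    by (simp add: sum.delta')
  also have "\<dots> = PP f ** X ** PP f"
  proof (cases "f \<in> Ev e0")
    case False
    have "PP f = 0"
    proof -
      have "chi e0 f = (\<lambda>i. 0)" using False by (auto simp: chi_def Ev_def fun_eq_iff)
      thus ?thesis by (simp add: pj_def spec_zero)
    qed
    thus ?thesis by simp
  qed simp
  finally show ?thesis .
qed

lemma pin_pj: "pin X ** PP f = PP f ** X ** PP f"
proof -
  have "pin X ** PP f = (\<Sum>e\<in>Ev e0. PP e ** X ** (PP e ** PP f))"
    unfolding pinch_spec[OF V] by (simp add: mult_sum_left matrix_mul_assoc)
  also have "\<dots> = (\<Sum>e\<in>Ev e0. if e = f then PP f ** X ** PP f else 0)"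
    by (rule sum.cong) (auto simp: pj_idem[OF V] pj_orth[OF V])
  also have "\<dots> = (if f \<in> Ev e0 then PP f ** X ** PP f else 0)"
    by (simp add: sum.delta')
  also have "\<dots> = PP f ** X ** PP f"
  proof (cases "f \<in> Ev e0")
    case False
    have "PP f = 0"
    proof -
      have "chi e0 f = (\<lambda>i. 0)" using False by (auto simp: chi_def Ev_def fun_eq_iff)
      thus ?thesis by (simp add: pj_def spec_zero)
    qed
    thus ?thesis by simp
  qed simp
  finally show ?thesis .
qed

lemma pin_comm: "PP f ** pin X = pin X ** PP f"
  by (simp add: pj_pin pin_pj)

lemma pin_fix: "(\<And>e. PP e ** Y = Y ** PP e) \<Longrightarrow> pin Y = Y"
proof -
  assume c: "\<And>e. PP e ** Y = Y ** PP e"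
  have "pin Y = (\<Sum>e\<in>Ev e0. PP e ** Y)"
    unfolding pinch_spec[OF V]
  proof (rule sum.cong)
    fix e
    have "PP e ** Y ** PP e = PP e ** (Y ** PP e)" by (simp add: matrix_mul_assoc)
    also have "\<dots> = PP e ** (PP e ** Y)" by (simp add: c)
    also have "\<dots> = PP e ** Y" by (simp add: matrix_mul_assoc pj_idem[OF V])
    finally show "PP e ** Y ** PP e = PP e ** Y" .
  qed simp
  also have "\<dots> = Y" by (simp add: mult_sum_left[symmetric] sum_pj[OF V])
  finally show ?thesis .
qed

lemma cinner_pj: "cinner x (PP e *v y) = cinner (PP e *v x) y"
  by (rule cinner_mv_herm[OF pj_herm])

lemma rayl_pin: "rayl (pin X) x = (\<Sum>e\<in>Ev e0. rayl X (PP e *v x))"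
proof -
  have "cinner x (pin X *v x) = (\<Sum>e\<in>Ev e0. cinner x ((PP e ** X ** PP e) *v x))"
    unfolding pinch_spec[OF V] by (simp add: matrix_vector_mult_sum_rdistrib cinner_sum_right)
  also have "\<dots> = (\<Sum>e\<in>Ev e0. cinner (PP e *v x) (X *v (PP e *v x)))"
    by (rule sum.cong) (simp_all add: matrix_vector_mul_assoc[symmetric] cinner_pj)
  finally show ?thesis unfolding rayl_def by (simp add: Re_sum)
qed

lemma norm_pj_sum: "(\<Sum>e\<in>Ev e0. (norm (PP e *v x))\<^sup>2) = (norm x)\<^sup>2"
proof -
  have "complex_of_real (\<Sum>e\<in>Ev e0. (norm (PP e *v x))\<^sup>2) = (\<Sum>e\<in>Ev e0. cinner (PP e *v x) (PP e *v x))"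
    by (simp add: cinner_self)
  also have "\<dots> = (\<Sum>e\<in>Ev e0. cinner x (PP e *v x))"
    by (rule sum.cong) (simp_all add: cinner_pj[symmetric] matrix_vector_mul_assoc pj_idem[OF V])
  also have "\<dots> = cinner x ((\<Sum>e\<in>Ev e0. PP e) *v x)"
    by (simp add: matrix_vector_mult_sum_rdistrib cinner_sum_right)
  also have "\<dots> = complex_of_real ((norm x)\<^sup>2)" by (simp add: sum_pj[OF V] cinner_self)
  finally show ?thesis by (simp only: of_real_eq_iff)
qed

lemma rayl_pin_lower: "(\<And>y. a * (norm y)\<^sup>2 \<le> rayl X y) \<Longrightarrow> a * (norm x)\<^sup>2 \<le> rayl (pin X) x"
proof -
  assume h: "\<And>y. a * (norm y)\<^sup>2 \<le> rayl X y"
  have "a * (norm x)\<^sup>2 = (\<Sum>e\<in>Ev e0. a * (norm (PP e *v x))\<^sup>2)"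
    by (simp add: sum_distrib_left[symmetric] norm_pj_sum)
  also have "\<dots> \<le> (\<Sum>e\<in>Ev e0. rayl X (PP e *v x))" by (intro sum_mono h)
  finally show ?thesis by (simp add: rayl_pin)
qed

lemma rayl_pin_upper: "(\<And>y. rayl X y \<le> a * (norm y)\<^sup>2) \<Longrightarrow> rayl (pin X) x \<le> a * (norm x)\<^sup>2"
proof -
  assume h: "\<And>y. rayl X y \<le> a * (norm y)\<^sup>2"
  have "rayl (pin X) x = (\<Sum>e\<in>Ev e0. rayl X (PP e *v x))" by (simp add: rayl_pin)
  also have "\<dots> \<le> (\<Sum>e\<in>Ev e0. a * (norm (PP e *v x))\<^sup>2)" by (intro sum_mono h)
  also have "\<dots> = a * (norm x)\<^sup>2"
    by (simp add: sum_distrib_left[symmetric] norm_pj_sum)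
  finally show ?thesis .
qed

end

lemma cinner_unitary: "unitary U \<Longrightarrow> cinner (cadj U *v x) (cadj U *v y) = cinner x y"
  by (simp add: cinner_mv matrix_vector_mul_assoc unitary_def)

lemma norm_unitary: "unitary U \<Longrightarrow> norm (cadj U *v x) = norm x"
proof -
  assume U: "unitary U"
  have "cinner (cadj U *v x) (cadj U *v x) = cinner x x" by (rule cinner_unitary[OF U])
  hence "complex_of_real ((norm (cadj U *v x))\<^sup>2) = complex_of_real ((norm x)\<^sup>2)"
    unfolding cinner_self .
  hence "(norm (cadj U *v x))\<^sup>2 = (norm x)\<^sup>2" by (simp only: of_real_eq_iff)
  thus ?thesis by (simp add: power2_eq_iff_nonneg)
qed

lemma rayl_spec: "unitary U \<Longrightarrow> rayl (spec U d) x = (\<Sum>i\<in>UNIV. d i * (norm ((cadj U *v x) $ i))\<^sup>2)"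
proof -
  assume U: "unitary U"
  define w where "w = cadj U *v x"
  have "cinner x (spec U d *v x) = cinner w (dmat (\<lambda>i. complex_of_real (d i)) *v w)"
    unfolding spec_def w_def by (simp add: cinner_mv matrix_vector_mul_assoc[symmetric])
  also have "\<dots> = (\<Sum>i\<in>UNIV. complex_of_real (d i * (norm (w $ i))\<^sup>2))"
    unfolding cinner_def dmat_mv
  proof (rule sum.cong)
    fix i
    show "cnj (w $ i) * (complex_of_real (d i) * w $ i) = complex_of_real (d i * (norm (w $ i))\<^sup>2)"
      by (subst of_real_mult, subst complex_norm_square) (simp add: ac_simps)
  qed simp
  finally show ?thesis unfolding rayl_def w_def by (simp add: Re_sum)
qed

lemma rayl_spec_lower: "unitary U \<Longrightarrow> (\<And>i. a \<le> d i) \<Longrightarrow> a * (norm x)\<^sup>2 \<le> rayl (spec U d) x"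
proof -
  assume U: "unitary U" and h: "\<And>i. a \<le> d i"
  have "a * (norm x)\<^sup>2 = (\<Sum>i\<in>UNIV. a * (norm ((cadj U *v x) $ i))\<^sup>2)"
    by (simp add: sum_distrib_left[symmetric] norm_vec_sq[symmetric] norm_unitary[OF U])
  also have "\<dots> \<le> (\<Sum>i\<in>UNIV. d i * (norm ((cadj U *v x) $ i))\<^sup>2)"
    by (intro sum_mono mult_right_mono h) simp
  finally show ?thesis by (simp add: rayl_spec[OF U])
qed

lemma rayl_spec_upper: "unitary U \<Longrightarrow> (\<And>i. d i \<le> a) \<Longrightarrow> rayl (spec U d) x \<le> a * (norm x)\<^sup>2"
proof -
  assume U: "unitary U" and h: "\<And>i. d i \<le> a"
  have "rayl (spec U d) x = (\<Sum>i\<in>UNIV. d i * (norm ((cadj U *v x) $ i))\<^sup>2)" by (simp add: rayl_spec[OF U])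
  also have "\<dots> \<le> (\<Sum>i\<in>UNIV. a * (norm ((cadj U *v x) $ i))\<^sup>2)"
    by (intro sum_mono mult_right_mono h) simp
  also have "\<dots> = a * (norm x)\<^sup>2"
    by (simp add: sum_distrib_left[symmetric] norm_vec_sq[symmetric] norm_unitary[OF U])
  finally show ?thesis .
qed

lemma spec_eig_rayl:
  assumes U: "unitary U"
  shows "\<exists>x. norm x = 1 \<and> rayl (spec U d) x = d i"
proof -
  define x where "x = U *v axis i 1"
  have cx: "cadj U *v x = axis i 1" using U by (simp add: x_def matrix_vector_mul_assoc unitary_def)
  have "norm x = norm (cadj U *v x)" by (simp add: norm_unitary[OF U])
  also have "\<dots> = 1"
  proof -
    have "(norm (axis i (1::complex)))\<^sup>2 = (\<Sum>j\<in>UNIV. if j = i then 1 else 0)"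
      unfolding norm_vec_sq by (rule sum.cong) (auto simp: axis_def)
    hence "(norm (axis i (1::complex)))\<^sup>2 = 1" by simp
    thus ?thesis by (simp add: cx power2_eq_1_iff)
  qed
  finally have "norm x = 1" .
  moreover have "rayl (spec U d) x = d i"
  proof -
    have "rayl (spec U d) x = (\<Sum>j\<in>UNIV. if j = i then d i else 0)"
      unfolding rayl_spec[OF U] cx by (rule sum.cong) (auto simp: axis_def)
    thus ?thesis by simp
  qed
  ultimately show ?thesis by blast
qed

lemma spec_eig_lower:
  "unitary U \<Longrightarrow> (\<And>x. a * (norm x)\<^sup>2 \<le> rayl (spec U d) x) \<Longrightarrow> a \<le> d i"
proof -
  assume U: "unitary U" and h: "\<And>x. a * (norm x)\<^sup>2 \<le> rayl (spec U d) x"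
  obtain x where x: "norm x = 1" "rayl (spec U d) x = d i" using spec_eig_rayl[OF U] by blast
  show ?thesis using h[of x] x by simp
qed

lemma spec_eig_upper:
  "unitary U \<Longrightarrow> (\<And>x. rayl (spec U d) x \<le> a * (norm x)\<^sup>2) \<Longrightarrow> d i \<le> a"
proof -
  assume U: "unitary U" and h: "\<And>x. rayl (spec U d) x \<le> a * (norm x)\<^sup>2"
  obtain x where x: "norm x = 1" "rayl (spec U d) x = d i" using spec_eig_rayl[OF U] by blast
  show ?thesis using h[of x] x by simp
qed

lemma spectral_spec: "hermitian A \<Longrightarrow> \<exists>U d. unitary U \<and> A = spec U d"
  using spectral unfolding spec_def by blast

lemma spec_conj: "unitary R \<Longrightarrow> R ** spec W q ** cadj R = spec (R ** W) q"
  unfolding spec_def by (simp add: cadj_mult matrix_mul_assoc)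

lemma mlog_commute:
  assumes R: "unitary R" and W: "unitary W" and q: "\<And>i. q i > 0"
    and c: "R ** spec W q = spec W q ** R"
  shows "R ** mlog (spec W q) = mlog (spec W q) ** R"
proof -
  define L where "L = mlog (spec W q)"
  have L: "L = spec W (\<lambda>i. ln (q i))" unfolding L_def by (rule mlog_spec[OF W q])
  have RW: "unitary (R ** W)" by (rule unitary_mult[OF R W])
  have A: "R ** spec W q ** cadj R = spec W q"
    using c R unfolding unitary_def by (metis matrix_mul_assoc matrix_mul_rid)
  have "mlog (spec W q) = R ** L ** cadj R"
  proof (rule mlog_eq)
    show "hermitian (R ** L ** cadj R)" unfolding L by (rule hermitian_conj[OF hermitian_spec])
    have "mexp (R ** L ** cadj R) = spec (R ** W) q"
      unfolding L spec_conj[OF R] mexp_spec[OF RW] using q by simp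
    also have "\<dots> = spec W q" using A spec_conj[OF R] by simp
    finally show "mexp (R ** L ** cadj R) = spec W q" .
  qed
  hence "L = R ** L ** cadj R" by (simp add: L_def)
  hence "L ** R = R ** L ** (cadj R ** R)" by (simp add: matrix_mul_assoc)
  thus ?thesis using R by (simp add: unitary_def L_def)
qed

lemma pin_mlog:
  assumes V: "unitary V" and W: "unitary W" and q: "\<And>i. q i > 0"
    and A: "spec W q = pinch (spec V e0) X"
  shows "pinch (spec V e0) (mlog (spec W q)) = mlog (spec W q)"
proof (rule pin_fix[OF V])
  fix e
  define P where "P = pj V e0 e"
  define R where "R = mat 1 - 2 *\<^sub>R P"
  have Ph: "cadj P = P" unfolding P_def using pj_herm[of V e0 e] by (simp add: hermitian_def)
  have PP: "P ** P = P" unfolding P_def by (rule pj_idem[OF V])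
  have RR: "R ** R = mat 1"
    unfolding R_def by (simp add: mult_diff_left mult_diff_right scaleR_mult_left scaleR_mult_right PP) (simp add: scaleR_diff_right flip: scaleR_left_diff_distrib)
  have R: "unitary R"
    unfolding unitary_def using RR by (simp add: R_def cadj_diff cadj_scaleR Ph)
  have cP: "P ** spec W q = spec W q ** P" unfolding A P_def by (rule pin_comm[OF V])
  have "R ** spec W q = spec W q ** R"
    unfolding R_def by (simp add: mult_diff_left mult_diff_right scaleR_mult_left scaleR_mult_right cP)
  from mlog_commute[OF R W q this]
  have "R ** mlog (spec W q) = mlog (spec W q) ** R" .
  thus "pj V e0 e ** mlog (spec W q) = mlog (spec W q) ** pj V e0 e"
    unfolding R_def P_def[symmetric]
    by (simp add: mult_diff_left mult_diff_right scaleR_mult_left scaleR_mult_right)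
qed

lemma norm_mat_sq: "(norm (A::'n::finite cmat))\<^sup>2 = (\<Sum>i\<in>UNIV. \<Sum>j\<in>UNIV. (norm (A$i$j))\<^sup>2)"
  by (simp add: norm_vec_def L2_set_def sum_nonneg)

lemma norm_cadj: "norm (cadj A) = norm (A::'n::finite cmat)"
proof -
  have "(norm (cadj A))\<^sup>2 = (norm A)\<^sup>2"
    unfolding norm_mat_sq cadj_nth complex_mod_cnj by (rule sum.swap)
  thus ?thesis by (simp add: power2_eq_iff_nonneg)
qed

lemma norm_mult_left_bound:
  assumes r: "r \<ge> 0" and Y: "\<And>v. norm ((Y::'n::finite cmat) *v v) \<le> r * norm v"
  shows "norm (Y ** Z) \<le> r * norm (Z::'n::finite cmat)"
proof -
  define col where "col j = (\<chi> i. Z $ i $ j)" for j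
  have e: "(Y ** Z) $ i $ j = (Y *v col j) $ i" for i j
    by (simp add: mmult_nth mvmult_nth col_def)
  have "(norm (Y ** Z))\<^sup>2 = (\<Sum>j\<in>UNIV. (norm (Y *v col j))\<^sup>2)"
    unfolding norm_mat_sq e norm_vec_sq by (rule sum.swap)
  also have "\<dots> \<le> (\<Sum>j\<in>UNIV. (r * norm (col j))\<^sup>2)"
    by (intro sum_mono power_mono Y) simp
  also have "\<dots> = r\<^sup>2 * (\<Sum>j\<in>UNIV. (norm (col j))\<^sup>2)"
    by (simp add: power_mult_distrib sum_distrib_left)
  also have "(\<Sum>j\<in>UNIV. (norm (col j))\<^sup>2) = (norm Z)\<^sup>2"
    unfolding norm_mat_sq norm_vec_sq col_def vec_lambda_beta by (rule sum.swap)
  finally have "(norm (Y ** Z))\<^sup>2 \<le> (r * norm Z)\<^sup>2" by (simp add: power_mult_distrib)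
  thus ?thesis using r by (simp add: power2_le_iff_abs_le)
qed

lemma norm_mult_right_bound:
  assumes r: "r \<ge> 0" and Y: "\<And>v. norm (cadj (Y::'n::finite cmat) *v v) \<le> r * norm v"
  shows "norm (Z ** Y) \<le> r * norm (Z::'n::finite cmat)"
proof -
  have "norm (Z ** Y) = norm (cadj Y ** cadj Z)" by (metis cadj_mult norm_cadj)
  also have "\<dots> \<le> r * norm (cadj Z)" by (rule norm_mult_left_bound[OF r Y])
  finally show ?thesis by (simp add: norm_cadj)
qed

lemma norm_unitary': "unitary U \<Longrightarrow> norm (U *v x) = norm x"
  using norm_unitary[of "cadj U" x] unitary_cadj[of U] by simp

lemma spec_mv_bound:
  assumes U: "unitary U" and r: "\<And>i. \<bar>d i\<bar> \<le> r"
  shows "norm (spec U d *v v) \<le> r * norm v"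
proof -
  define w where "w = cadj U *v v"
  have "spec U d *v v = U *v (dmat (\<lambda>i. complex_of_real (d i)) *v w)"
    by (simp add: spec_def w_def matrix_vector_mul_assoc matrix_mul_assoc)
  hence "norm (spec U d *v v) = norm (dmat (\<lambda>i. complex_of_real (d i)) *v w)"
    by (simp add: norm_unitary'[OF U])
  also have "\<dots> \<le> r * norm w"
  proof -
    have r0: "r \<ge> 0" using r[of undefined] by linarith
    have "(norm (dmat (\<lambda>i. complex_of_real (d i)) *v w))\<^sup>2 = (\<Sum>i\<in>UNIV. (d i)\<^sup>2 * (norm (w $ i))\<^sup>2)"
      unfolding norm_vec_sq dmat_mv by (simp add: norm_mult power_mult_distrib)
    also have "\<dots> \<le> (\<Sum>i\<in>UNIV. r\<^sup>2 * (norm (w $ i))\<^sup>2)"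
      by (intro sum_mono mult_right_mono) (use r in \<open>auto simp: power2_le_iff_abs_le r0\<close>)
    also have "\<dots> = (r * norm w)\<^sup>2" by (simp add: norm_vec_sq power_mult_distrib sum_distrib_left)
    finally show ?thesis using r0 by (simp add: power2_le_iff_abs_le)
  qed
  also have "norm w = norm v" by (simp add: w_def norm_unitary[OF U])
  finally show ?thesis .
qed

lemma spec_mult_bound_left:
  fixes U Z :: "'n::finite cmat"
  assumes U: "unitary U" and r: "\<And>i. \<bar>d i\<bar> \<le> r"
  shows "norm (spec U d ** Z) \<le> r * norm Z"
proof (rule norm_mult_left_bound)
  show "r \<ge> 0" using r[of undefined] by linarith
  show "norm (spec U d *v v) \<le> r * norm v" for v by (rule spec_mv_bound[OF U r])
qed

lemma spec_mult_bound_right: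
  fixes U Z :: "'n::finite cmat"
  assumes U: "unitary U" and r: "\<And>i. \<bar>d i\<bar> \<le> r"
  shows "norm (Z ** spec U d) \<le> r * norm Z"
proof (rule norm_mult_right_bound)
  show "r \<ge> 0" using r[of undefined] by linarith
  have "cadj (spec U d) = spec U d" using hermitian_spec[of U d] by (simp add: hermitian_def)
  thus "norm (cadj (spec U d) *v v) \<le> r * norm v" for v using spec_mv_bound[OF U r] by simp
qed

lemma mpow_spec: "unitary U \<Longrightarrow> mpow (spec U d) k = spec U (\<lambda>i. d i ^ k)"
  unfolding spec_def by (simp add: mpow_conj mpow_dmat)

lemma series_spec:
  assumes U: "unitary U" and s: "\<And>i. (\<lambda>k. F k i) sums G i"
  shows "(\<lambda>k. spec U (F k)) sums spec U G"
proof -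
  have "(\<lambda>k. dmat (\<lambda>i. complex_of_real (F k i))) sums dmat (\<lambda>i. complex_of_real (G i))"
  proof (rule sums_mat)
    fix i j show "(\<lambda>k. dmat (\<lambda>i. complex_of_real (F k i)) $ i $ j) sums (dmat (\<lambda>i. complex_of_real (G i)) $ i $ j)"
      by (cases "i = j") (simp_all add: dmat_nth sums_of_real s)
  qed
  from bounded_linear.sums[OF bounded_linear_conj[of U "cadj U"] this]
  show ?thesis unfolding spec_def .
qed

lemma ln_series_xi:
  fixes x :: real assumes "0 \<le> x" "x < 1"
  shows "(\<lambda>k. (1 / real (Suc k)) * x ^ Suc k) sums (- ln (1 - x))"
proof -
  have "ln (1 - x) = (\<Sum>n. (-1)^n * (1 / real (n + 1)) * ((1 - x) - 1)^(Suc n))"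
    by (rule ln_series) (use assms in auto)
  also have "(\<lambda>n. (-1)^n * (1 / real (n + 1)) * ((1 - x) - 1)^(Suc n)) = (\<lambda>n. - ((1 / real (Suc n)) * x ^ Suc n))"
  proof
    fix n
    have s: "((1 - x) - 1) ^ Suc n = (-1) ^ Suc n * x ^ Suc n"
    proof -
      have "(1 - x) - 1 = - x" by simp
      thus ?thesis by (simp only: power_minus[of x])
    qed
    have t: "(-1::real) ^ n * (-1) ^ Suc n = -1" by (induction n) auto
    have "(-1)^n * (1 / real (n + 1)) * ((1 - x) - 1)^(Suc n)
        = ((-1)^n * (-1) ^ Suc n) * ((1 / real (Suc n)) * x ^ Suc n)"
      unfolding s by (simp add: mult_ac)
    also have "\<dots> = - ((1 / real (Suc n)) * x ^ Suc n)" unfolding t by simp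
    finally show "(-1)^n * (1 / real (n + 1)) * ((1 - x) - 1)^(Suc n) = - ((1 / real (Suc n)) * x ^ Suc n)" .
  qed
  finally have e: "ln (1 - x) = (\<Sum>n. - ((1 / real (Suc n)) * x ^ Suc n))" .
  have "summable (\<lambda>n. (1 / real (Suc n)) * x ^ Suc n)"
  proof (rule summable_comparison_test[OF _ summable_geometric[of x]])
    show "\<exists>N. \<forall>n\<ge>N. norm ((1 / real (Suc n)) * x ^ Suc n) \<le> x ^ n"
    proof (intro exI[of _ 0] allI impI)
      fix n :: nat
      have a: "0 \<le> 1 / real (Suc n)" "1 / real (Suc n) \<le> 1" by (auto simp: field_simps)
      have b: "0 \<le> x ^ n" using assms by simp
      have "norm ((1 / real (Suc n)) * x ^ Suc n) = (1 / real (Suc n)) * x * x ^ n"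
        using assms by (simp add: abs_mult)
      also have "\<dots> \<le> 1 * 1 * x ^ n"
        by (intro mult_right_mono mult_mono a b) (use assms in auto)
      finally show "norm ((1 / real (Suc n)) * x ^ Suc n) \<le> x ^ n" by simp
    qed
    show "norm x < 1" using assms by simp
  qed
  hence "(\<lambda>n. (1 / real (Suc n)) * x ^ Suc n) sums (\<Sum>n. (1 / real (Suc n)) * x ^ Suc n)"
    by (simp add: summable_sums)
  moreover have "(\<Sum>n. (1 / real (Suc n)) * x ^ Suc n) = - ln (1 - x)"
    using e \<open>summable _\<close> by (simp add: suminf_minus)
  ultimately show ?thesis by simp
qed

definition logser :: "'n::finite cmat \<Rightarrow> 'n cmat" where
  "logser X = (\<Sum>k. (1 / real (Suc k)) *\<^sub>R mpow X (Suc k))"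

lemma mlog_series:
  assumes W: "unitary W" and c: "c > 0" and q: "\<And>i. 0 < q i \<and> q i \<le> c"
  shows "mlog (spec W q) = ln c *\<^sub>R mat 1 - logser (mat 1 - (1/c) *\<^sub>R spec W q)"
proof -
  define xi where "xi i = 1 - q i / c" for i
  have xi: "0 \<le> xi i" "xi i < 1" for i using q[of i] c by (auto simp: xi_def field_simps)
  have X: "mat 1 - (1/c) *\<^sub>R spec W q = spec W xi"
    unfolding spec_one[OF W, symmetric] spec_scaleR spec_diff xi_def by simp
  have "(\<lambda>k. spec W (\<lambda>i. (1 / real (Suc k)) * xi i ^ Suc k)) sums spec W (\<lambda>i. - ln (1 - xi i))"
    by (rule series_spec[OF W ln_series_xi]) (use xi in auto)
  hence "(\<lambda>k. (1 / real (Suc k)) *\<^sub>R mpow (spec W xi) (Suc k)) sums spec W (\<lambda>i. - ln (1 - xi i))"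
    by (simp only: mpow_spec[OF W] spec_scaleR)
  hence ls: "logser (spec W xi) = spec W (\<lambda>i. - ln (1 - xi i))"
    unfolding logser_def by (rule sums_unique[symmetric])
  have "mlog (spec W q) = spec W (\<lambda>i. ln (q i))" by (rule mlog_spec[OF W]) (use q in auto)
  also have "\<dots> = ln c *\<^sub>R mat 1 - spec W (\<lambda>i. - ln (1 - xi i))"
  proof -
    have "ln (q i) = ln c * 1 - - ln (1 - xi i)" for i
      using q[of i] c by (simp add: xi_def ln_div)
    thus ?thesis unfolding spec_one[OF W, symmetric] spec_scaleR spec_diff by simp
  qed
  finally show ?thesis unfolding X ls .
qed

lemma bilinear_mmult: "bounded_bilinear (\<lambda>A B. (A::'n::finite cmat) ** (B::'n cmat))"
proof -
  have "bilinear (\<lambda>A B. (A::'n::finite cmat) ** (B::'n cmat))"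
    unfolding bilinear_def
    by (auto intro!: linearI simp: mult_add_left mult_add_right scaleR_mult_left scaleR_mult_right)
  thus ?thesis by (simp add: bilinear_conv_bounded_bilinear)
qed

fun Dp :: "'n::finite cmat \<Rightarrow> 'n cmat \<Rightarrow> nat \<Rightarrow> 'n cmat" where
  "Dp X X' 0 = 0"
| "Dp X X' (Suc n) = X' ** mpow X n + X ** Dp X X' n"

lemma mpow_deriv:
  assumes "(Xf has_vector_derivative X') (at b within S)"
  shows "((\<lambda>b. mpow (Xf b) n) has_vector_derivative Dp (Xf b) X' n) (at b within S)"
proof (induction n)
  case 0 thus ?case by simp
next
  case (Suc n)
  from bounded_bilinear.has_vector_derivative[OF bilinear_mmult assms Suc]
  show ?case by (simp add: add.commute)
qed

lemma mpow_right_bound: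
  fixes X Z :: "'n::finite cmat"
  assumes r: "r \<ge> 0" and X: "\<And>Z::'n cmat. norm (Z ** X) \<le> r * norm Z"
  shows "norm (Z ** mpow X n) \<le> r ^ n * norm (Z::'n::finite cmat)"
proof (induction n arbitrary: Z)
  case 0 thus ?case by simp
next
  case (Suc n)
  have "norm (Z ** mpow X (Suc n)) = norm ((Z ** X) ** mpow X n)" by (simp add: matrix_mul_assoc)
  also have "\<dots> \<le> r ^ n * norm (Z ** X)" by (rule Suc)
  also have "\<dots> \<le> r ^ n * (r * norm Z)" by (intro mult_left_mono X) (use r in simp)
  finally show ?case by (simp add: mult_ac)
qed

lemma mpow_bound:
  fixes X :: "'n::finite cmat"
  assumes r: "r \<ge> 0" and X: "\<And>Z::'n cmat. norm (Z ** X) \<le> r * norm Z"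
  shows "norm (mpow X n) \<le> r ^ n * norm (mat 1 :: 'n::finite cmat)"
  using mpow_right_bound[OF r X, of "mat 1" n] by simp

lemma Dp_bound:
  fixes X X' :: "'n::finite cmat"
  assumes r: "r \<ge> 0" and XL: "\<And>Z::'n cmat. norm (X ** Z) \<le> r * norm Z" and XR: "\<And>Z::'n cmat. norm (Z ** X) \<le> r * norm Z"
  shows "norm (Dp X X' (Suc n)) \<le> real (Suc n) * r ^ n * norm (X'::'n::finite cmat)"
proof (induction n)
  case 0 thus ?case by simp
next
  case (Suc n)
  have "norm (Dp X X' (Suc (Suc n))) \<le> norm (X' ** mpow X (Suc n)) + norm (X ** Dp X X' (Suc n))"
    by (simp add: norm_triangle_ineq)
  also have "\<dots> \<le> r ^ Suc n * norm X' + r * (real (Suc n) * r ^ n * norm X')"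
    by (intro add_mono mpow_right_bound[OF r XR] order_trans[OF XL] mult_left_mono Suc r)
  also have "\<dots> = real (Suc (Suc n)) * r ^ Suc n * norm X'" by (simp add: algebra_simps)
  finally show ?case .
qed

definition Dsum :: "'n::finite cmat \<Rightarrow> 'n cmat \<Rightarrow> 'n cmat" where
  "Dsum X X' = (\<Sum>k. (1 / real (Suc k)) *\<^sub>R Dp X X' (Suc k))"

lemma Dterm_bound:
  fixes X X' :: "'n::finite cmat"
  assumes r: "r \<ge> 0" and XL: "\<And>Z::'n cmat. norm (X ** Z) \<le> r * norm Z" and XR: "\<And>Z::'n cmat. norm (Z ** X) \<le> r * norm Z"
  shows "norm ((1 / real (Suc k)) *\<^sub>R Dp X X' (Suc k)) \<le> r ^ k * norm (X'::'n::finite cmat)"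
proof -
  have "norm ((1 / real (Suc k)) *\<^sub>R Dp X X' (Suc k)) = (1 / real (Suc k)) * norm (Dp X X' (Suc k))"
    by simp
  also have "\<dots> \<le> (1 / real (Suc k)) * (real (Suc k) * r ^ k * norm X')"
    by (intro mult_left_mono Dp_bound[OF r XL XR]) simp
  also have "\<dots> = r ^ k * norm X'" by simp
  finally show ?thesis .
qed

lemma logser_deriv:
  fixes Xf X'f :: "real \<Rightarrow> 'n::finite cmat"
  assumes T: "open T" "convex T" "b0 \<in> T"
    and der: "\<And>b. b \<in> T \<Longrightarrow> (Xf has_vector_derivative X'f b) (at b)"
    and r: "0 \<le> r" "r < 1"
    and XL: "\<And>b (Z::'n cmat). b \<in> T \<Longrightarrow> norm (Xf b ** Z) \<le> r * norm Z"
    and XR: "\<And>b (Z::'n cmat). b \<in> T \<Longrightarrow> norm (Z ** Xf b) \<le> r * norm Z"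
    and C: "\<And>b. b \<in> T \<Longrightarrow> norm (X'f b) \<le> C"
  shows "((\<lambda>b. logser (Xf b)) has_vector_derivative Dsum (Xf b0) (X'f b0)) (at b0)"
proof -
  define f where "f k b = (1 / real (Suc k)) *\<^sub>R mpow (Xf b) (Suc k)" for k b
  define D where "D k b = (1 / real (Suc k)) *\<^sub>R Dp (Xf b) (X'f b) (Suc k)" for k b
  have fd: "(f k has_derivative (\<lambda>t. t *\<^sub>R D k b)) (at b within T)" if "b \<in> T" for k b
  proof -
    have "((\<lambda>b. mpow (Xf b) (Suc k)) has_vector_derivative Dp (Xf b) (X'f b) (Suc k)) (at b within T)"
      by (rule mpow_deriv) (rule has_vector_derivative_at_within[OF der[OF that]])
    hence "(f k has_vector_derivative D k b) (at b within T)"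
      unfolding f_def D_def by (rule bounded_linear.has_vector_derivative[OF bounded_linear_scaleR_right])
    thus ?thesis by (simp add: has_vector_derivative_def D_def)
  qed
  have Dbound: "norm (D k b) \<le> C * r ^ k" if "b \<in> T" for k b
  proof -
    have "norm (D k b) \<le> r ^ k * norm (X'f b)"
      unfolding D_def by (rule Dterm_bound[OF r(1) XL[OF that] XR[OF that]])
    also have "\<dots> \<le> r ^ k * C" by (intro mult_left_mono C that) (use r in simp)
    finally show ?thesis by (simp add: mult.commute)
  qed
  have summ: "summable (\<lambda>k. C * r ^ k)" using r by (intro summable_mult summable_geometric) simp
  have ul: "uniform_limit T (\<lambda>n b. \<Sum>i<n. D i b) (\<lambda>b. \<Sum>i. D i b) sequentially"
    by (rule Weierstrass_m_test_ev[OF _ summ]) (use Dbound in auto)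
  have f0: "norm (f k b0) \<le> norm (mat 1 :: 'n cmat) * r ^ k" for k
  proof -
    have "norm (f k b0) = (1 / real (Suc k)) * norm (mpow (Xf b0) (Suc k))" unfolding f_def by simp
    also have "\<dots> \<le> 1 * norm (mpow (Xf b0) (Suc k))" by (intro mult_right_mono) auto
    finally have "norm (f k b0) \<le> norm (mpow (Xf b0) (Suc k))" by simp
    also have "\<dots> \<le> r ^ Suc k * norm (mat 1 :: 'n cmat)"
      by (rule mpow_bound[OF r(1) XR[OF T(3)]])
    also have "\<dots> \<le> r ^ k * norm (mat 1 :: 'n cmat)"
      by (intro mult_right_mono power_decreasing) (use r in auto)
    finally show ?thesis by (simp add: mult.commute)
  qed
  have "summable (\<lambda>k. f k b0)"
    by (rule summable_comparison_test[OF _ summable_mult[OF summable_geometric[of r]]])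
       (use f0 r in auto)
  hence sums0: "(\<lambda>k. f k b0) sums (\<Sum>k. f k b0)" by (simp add: summable_sums)
  have "\<exists>g. \<forall>x\<in>T. (\<lambda>n. f n x) sums (g x) \<and> (g has_derivative (\<lambda>t. t *\<^sub>R (\<Sum>i. D i x))) (at x within T)"
  proof (rule has_derivative_series[OF T(2) fd _ T(3) sums0])
    fix e :: real assume "e > 0"
    from uniform_limitD[OF ul this]
    have ev: "\<forall>\<^sub>F n in sequentially. \<forall>x\<in>T. dist (\<Sum>i<n. D i x) (\<Sum>i. D i x) < e" .
    show "\<forall>\<^sub>F n in sequentially. \<forall>x\<in>T. \<forall>h. norm ((\<Sum>i<n. h *\<^sub>R D i x) - h *\<^sub>R (\<Sum>i. D i x)) \<le> e * norm h"
    proof (rule eventually_mono[OF ev], intro ballI allI)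
      fix n x h assume a: "\<forall>x\<in>T. dist (\<Sum>i<n. D i x) (\<Sum>i. D i x) < e" and x: "x \<in> T"
      have "norm ((\<Sum>i<n. h *\<^sub>R D i x) - h *\<^sub>R (\<Sum>i. D i x)) = \<bar>h\<bar> * norm ((\<Sum>i<n. D i x) - (\<Sum>i. D i x))"
        by (simp add: scaleR_sum_right[symmetric] scaleR_diff_right[symmetric])
      also have "\<dots> \<le> \<bar>h\<bar> * e" using a x by (intro mult_left_mono) (auto simp: dist_norm)
      finally show "norm ((\<Sum>i<n. h *\<^sub>R D i x) - h *\<^sub>R (\<Sum>i. D i x)) \<le> e * norm h" by (simp add: mult.commute)
    qed
  qed auto
  then obtain g where g: "\<And>x. x \<in> T \<Longrightarrow> (\<lambda>n. f n x) sums (g x)"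
    "\<And>x. x \<in> T \<Longrightarrow> (g has_derivative (\<lambda>t. t *\<^sub>R (\<Sum>i. D i x))) (at x within T)" by blast
  have "(g has_derivative (\<lambda>t. t *\<^sub>R (\<Sum>i. D i b0))) (at b0)"
    using g(2)[OF T(3)] unfolding at_within_open[OF T(3,1)] .
  hence gd: "(g has_vector_derivative (\<Sum>i. D i b0)) (at b0)"
    unfolding has_vector_derivative_def .
  have geq: "g x = logser (Xf x)" if "x \<in> T" for x
    using g(1)[OF that] unfolding logser_def f_def by (rule sums_unique)
  have "((\<lambda>b. logser (Xf b)) has_vector_derivative (\<Sum>i. D i b0)) (at b0)"
    by (rule has_vector_derivative_transform_within_open[OF gd T(1,3)]) (rule geq)
  thus ?thesis unfolding Dsum_def D_def .
qed

lemma mpow_comm: "Y ** X = X ** Y \<Longrightarrow> Y ** mpow X n = mpow X n ** (Y::'n::finite cmat)"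
proof (induction n)
  case 0 thus ?case by simp
next
  case (Suc n)
  have "Y ** mpow X (Suc n) = (Y ** X) ** mpow X n" by (simp add: matrix_mul_assoc)
  also have "\<dots> = X ** (Y ** mpow X n)" using Suc.prems by (simp add: matrix_mul_assoc)
  also have "\<dots> = X ** (mpow X n ** Y)" using Suc by simp
  finally show ?case by (simp add: matrix_mul_assoc)
qed

lemma trace_Dp:
  fixes X X' Y :: "'n::finite cmat"
  shows "Y ** X = X ** Y \<Longrightarrow> trace (Y ** Dp X X' (Suc n)) = of_nat (Suc n) * trace (Y ** mpow X n ** X')"
proof (induction n arbitrary: Y)
  case 0 thus ?case by simp
next
  case (Suc n)
  have c1: "(Y ** X) ** X = X ** (Y ** X)"
  proof -
    have "(Y ** X) ** X = (X ** Y) ** X" using Suc.prems by simp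
    thus ?thesis by (simp add: matrix_mul_assoc)
  qed
  have "trace (Y ** Dp X X' (Suc (Suc n))) = trace (Y ** (X' ** mpow X (Suc n))) + trace ((Y ** X) ** Dp X X' (Suc n))"
    by (simp only: Dp.simps mult_add_right trace_add matrix_mul_assoc)
  also have "trace ((Y ** X) ** Dp X X' (Suc n)) = of_nat (Suc n) * trace (Y ** X ** mpow X n ** X')"
    by (rule Suc.IH[OF c1])
  also have "Y ** X ** mpow X n ** X' = Y ** mpow X (Suc n) ** X'" by (simp add: matrix_mul_assoc)
  also have "trace (Y ** (X' ** mpow X (Suc n))) = trace (Y ** mpow X (Suc n) ** X')"
  proof -
    have "trace (Y ** (X' ** mpow X (Suc n))) = trace ((Y ** X') ** mpow X (Suc n))" by (simp add: matrix_mul_assoc)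
    also have "\<dots> = trace (mpow X (Suc n) ** (Y ** X'))" by (rule trace_mul_sym)
    also have "\<dots> = trace ((mpow X (Suc n) ** Y) ** X')" by (simp add: matrix_mul_assoc)
    also have "mpow X (Suc n) ** Y = Y ** mpow X (Suc n)" by (rule mpow_comm[OF Suc.prems, symmetric])
    finally show ?thesis .
  qed
  finally show ?case by (simp add: algebra_simps)
qed

lemma bounded_linear_trace_mult: "bounded_linear (\<lambda>A. trace (Y ** (A::'n::finite cmat)))"
proof -
  have "linear (\<lambda>A. trace (Y ** (A::'n::finite cmat)))"
    by (rule linearI) (simp_all add: mult_add_right trace_add scaleR_mult_right trace_scaleR)
  thus ?thesis by (simp add: linear_conv_bounded_linear)
qed

lemma trace_Dsum:
  fixes X X' Y :: "'n::finite cmat"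
  assumes YX: "Y ** X = X ** Y" and r: "0 \<le> r" "r < 1"
    and XL: "\<And>Z::'n cmat. norm (X ** Z) \<le> r * norm Z" and XR: "\<And>Z::'n cmat. norm (Z ** X) \<le> r * norm Z"
  shows "(\<lambda>k. trace (Y ** mpow X k ** X')) sums trace (Y ** Dsum X X')"
proof -
  define D where "D k = (1 / real (Suc k)) *\<^sub>R Dp X X' (Suc k)" for k
  have "summable (\<lambda>k. norm (D k))"
    by (rule summable_comparison_test[OF _ summable_mult2[OF summable_geometric[of r]]])
       (use Dterm_bound[OF r(1) XL XR] r in \<open>auto simp: D_def\<close>)
  hence "summable D" by (rule summable_norm_cancel)
  hence "D sums Dsum X X'" unfolding Dsum_def D_def by (simp add: summable_sums)
  from bounded_linear.sums[OF bounded_linear_trace_mult this, of Y]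
  have "(\<lambda>k. trace (Y ** D k)) sums trace (Y ** Dsum X X')" .
  moreover have "trace (Y ** D k) = trace (Y ** mpow X k ** X')" for k
  proof -
    have nz: "(1::complex) + of_nat k \<noteq> 0"
    proof -
      have "(1::complex) + of_nat k = of_nat (Suc k)" by simp
      thus ?thesis by (simp only: of_nat_eq_0_iff)
    qed
    show ?thesis
      unfolding D_def scaleR_mult_right trace_scaleR trace_Dp[OF YX]
      using nz by (simp add: scaleR_conv_of_real)
  qed
  ultimately show ?thesis by simp
qed

lemma mpow_left_bound:
  fixes X Z :: "'n::finite cmat"
  assumes r: "r \<ge> 0" and X: "\<And>Z::'n cmat. norm (X ** Z) \<le> r * norm Z"
  shows "norm (mpow X n ** Z) \<le> r ^ n * norm Z"
proof (induction n)
  case 0 thus ?case by simp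
next
  case (Suc n)
  have "norm (mpow X (Suc n) ** Z) = norm (X ** (mpow X n ** Z))" by (simp add: matrix_mul_assoc)
  also have "\<dots> \<le> r * norm (mpow X n ** Z)" by (rule X)
  also have "\<dots> \<le> r * (r ^ n * norm Z)" by (intro mult_left_mono Suc r)
  finally show ?case by (simp add: mult_ac)
qed

lemma trace_Dsum_telescope:
  fixes X X' :: "'n::finite cmat"
  assumes r: "0 \<le> r" "r < 1"
    and XL: "\<And>Z::'n cmat. norm (X ** Z) \<le> r * norm Z" and XR: "\<And>Z::'n cmat. norm (Z ** X) \<le> r * norm Z"
  shows "trace ((mat 1 - X) ** Dsum X X') = trace X'"
proof -
  have YX: "(mat 1 - X) ** X = X ** (mat 1 - X)" by (simp add: mult_diff_left mult_diff_right)
  define a where "a k = trace (mpow X k ** X')" for k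
  have t: "trace ((mat 1 - X) ** mpow X k ** X') = a k - a (Suc k)" for k
    unfolding a_def by (simp add: mult_diff_left trace_sub matrix_mul_assoc)
  have g0: "(\<lambda>k. r ^ k * norm X') \<longlonglongrightarrow> 0"
    by (intro tendsto_mult_left_zero LIMSEQ_power_zero) (use r in simp)
  have tl: "(\<lambda>k. mpow X k ** X') \<longlonglongrightarrow> 0"
  proof (rule Lim_null_comparison[OF _ g0])
    show "\<forall>\<^sub>F k in sequentially. norm (mpow X k ** X') \<le> r ^ k * norm X'"
      using mpow_left_bound[OF r(1) XL] by simp
  qed
  have bl: "bounded_linear (trace :: 'n cmat \<Rightarrow> complex)"
    using bounded_linear_trace_mult[of "mat 1"] by simp
  have "(\<lambda>k. trace (mpow X k ** X')) \<longlonglongrightarrow> trace (0::'n cmat)"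
    by (rule bounded_linear.tendsto[OF bl tl])
  hence "a \<longlonglongrightarrow> 0" unfolding a_def by simp
  from telescope_sums'[OF this]
  have "(\<lambda>k. a k - a (Suc k)) sums (a 0 - 0)" .
  hence "(\<lambda>k. trace ((mat 1 - X) ** mpow X k ** X')) sums trace X'" by (simp add: t a_def)
  moreover have "(\<lambda>k. trace ((mat 1 - X) ** mpow X k ** X')) sums trace ((mat 1 - X) ** Dsum X X')"
    by (rule trace_Dsum[OF YX r XL XR])
  ultimately show ?thesis using sums_unique2 by blast
qed

lemma spec_expand: "spec U d = (\<Sum>i\<in>UNIV. d i *\<^sub>R spec U (\<lambda>j. if j = i then 1 else 0))"
proof -
  have "(\<Sum>i\<in>UNIV. d i *\<^sub>R spec U (\<lambda>j. if j = i then 1 else 0)) = spec U (\<lambda>j. \<Sum>i\<in>UNIV. d i * (if j = i then 1 else 0))"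
    by (simp add: spec_scaleR spec_sum)
  also have "(\<lambda>j. \<Sum>i\<in>UNIV. d i * (if j = i then 1 else 0)) = d"
    by (simp add: fun_eq_iff if_distrib cong: if_cong)
  finally show ?thesis by simp
qed

lemma spec_deriv:
  assumes "\<And>i. (f i has_real_derivative f' i) (at b within S)"
  shows "((\<lambda>b. spec U (\<lambda>i. f i b)) has_vector_derivative spec U f') (at b within S)"
proof -
  define P where "P i = spec U (\<lambda>j. if j = i then 1 else 0)" for i
  have "((\<lambda>b. \<Sum>i\<in>UNIV. f i b *\<^sub>R P i) has_vector_derivative (\<Sum>i\<in>UNIV. f' i *\<^sub>R P i)) (at b within S)"
  proof (intro has_vector_derivative_sum)
    fix i
    have "((\<lambda>b. f i b) has_vector_derivative f' i) (at b within S)"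
      using assms[of i] by (simp add: has_real_derivative_iff_has_vector_derivative)
    from bounded_linear.has_vector_derivative[OF bounded_linear_scaleR_left this]
    show "((\<lambda>b. f i b *\<^sub>R P i) has_vector_derivative f' i *\<^sub>R P i) (at b within S)" .
  qed
  thus ?thesis unfolding P_def spec_expand[of U "\<lambda>i. f i _"] spec_expand[of U f'] .
qed

definition Eb :: "'n::finite cmat \<Rightarrow> ('n \<Rightarrow> real) \<Rightarrow> real \<Rightarrow> 'n cmat" where
  "Eb U h b = spec U (\<lambda>i. exp (- b * h i))"

definition Ed :: "'n::finite cmat \<Rightarrow> ('n \<Rightarrow> real) \<Rightarrow> real \<Rightarrow> 'n cmat" where
  "Ed U h b = spec U (\<lambda>i. - h i * exp (- b * h i))"

lemma E_deriv: "((\<lambda>b. Eb U h b) has_vector_derivative Ed U h b) (at b within S)"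
  unfolding Eb_def Ed_def
  by (rule spec_deriv) (auto intro!: derivative_eq_intros)

lemma norm_spec_bound:
  assumes U: "unitary U"
  shows "norm (spec U d) \<le> (\<Sum>i\<in>UNIV. \<bar>d i\<bar> * norm (spec U (\<lambda>j. if j = i then 1 else 0)))"
proof -
  have "norm (spec U d) \<le> (\<Sum>i\<in>UNIV. norm (d i *\<^sub>R spec U (\<lambda>j. if j = i then 1 else 0)))"
    by (subst spec_expand) (rule norm_sum)
  thus ?thesis by simp
qed

context
  fixes U V :: "'n::finite cmat" and h e0 :: "'n \<Rightarrow> real"
  assumes U: "unitary U" and V: "unitary V"
begin

abbreviation "Mb b \<equiv> pinch (spec V e0) (Eb U h b)"
abbreviation "Md b \<equiv> pinch (spec V e0) (Ed U h b)"

lemma M_deriv: "((\<lambda>b. Mb b) has_vector_derivative Md b) (at b within S)"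
  by (rule bounded_linear.has_vector_derivative[OF bounded_linear_pin[OF V] E_deriv])

definition "Kh = (\<Sum>i\<in>UNIV. \<bar>h i\<bar>)"

lemma exp_bounds: "exp (- (\<bar>b\<bar> * Kh)) \<le> exp (- b * h i) \<and> exp (- b * h i) \<le> exp (\<bar>b\<bar> * Kh)"
proof -
  have hi: "\<bar>h i\<bar> \<le> Kh" unfolding Kh_def by (rule member_le_sum) auto
  have "\<bar>b * h i\<bar> \<le> \<bar>b\<bar> * Kh" by (simp add: abs_mult mult_left_mono hi)
  hence "- (\<bar>b\<bar> * Kh) \<le> - b * h i" "- b * h i \<le> \<bar>b\<bar> * Kh" by (simp_all add: abs_le_iff)
  thus ?thesis by simp
qed

lemma M_spec: "\<exists>W q. unitary W \<and> Mb b = spec W q \<and>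
   (\<forall>i. exp (- (\<bar>b\<bar> * Kh)) \<le> q i \<and> q i \<le> exp (\<bar>b\<bar> * Kh))"
proof -
  have herm: "hermitian (Mb b)" unfolding Eb_def by (intro herm_pin[OF V] hermitian_spec)
  obtain W q where W: "unitary W" and q: "Mb b = spec W q" using spectral_spec[OF herm] by blast
  have lo: "exp (- (\<bar>b\<bar> * Kh)) * (norm x)\<^sup>2 \<le> rayl (Mb b) x" for x
    by (rule rayl_pin_lower[OF V], unfold Eb_def, rule rayl_spec_lower[OF U]) (use exp_bounds in auto)
  have up: "rayl (Mb b) x \<le> exp (\<bar>b\<bar> * Kh) * (norm x)\<^sup>2" for x
    by (rule rayl_pin_upper[OF V], unfold Eb_def, rule rayl_spec_upper[OF U]) (use exp_bounds in auto)
  have "exp (- (\<bar>b\<bar> * Kh)) \<le> q i \<and> q i \<le> exp (\<bar>b\<bar> * Kh)" for i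
    using spec_eig_lower[OF W, of "exp (- (\<bar>b\<bar> * Kh))" q i] spec_eig_upper[OF W, of q "exp (\<bar>b\<bar> * Kh)" i]
      lo up unfolding q by blast
  thus ?thesis using W q by blast
qed

lemma local_log:
  assumes beta: "\<beta> > 0"
  shows "\<exists>T c r C. open T \<and> convex T \<and> \<beta> \<in> T \<and> c > 0 \<and> 0 \<le> r \<and> r < 1 \<and>
    (\<forall>b\<in>T. mlog (Mb b) = ln c *\<^sub>R mat 1 - logser (mat 1 - (1/c) *\<^sub>R Mb b)
       \<and> (\<forall>Z::'n cmat. norm ((mat 1 - (1/c) *\<^sub>R Mb b) ** Z) \<le> r * norm Z)
       \<and> (\<forall>Z::'n cmat. norm (Z ** (mat 1 - (1/c) *\<^sub>R Mb b)) \<le> r * norm Z)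
       \<and> norm (- (1/c) *\<^sub>R Md b) \<le> C)"
proof -
  define T where "T = {\<beta>/2 <..< 2*\<beta>}"
  define a0 where "a0 = exp (- (2*\<beta> * Kh))"
  define B0 where "B0 = exp (2*\<beta> * Kh)"
  define c where "c = 2 * B0"
  define r where "r = 1 - a0 / c"
  have a0: "a0 > 0" by (simp add: a0_def)
  have a0B0: "a0 \<le> B0" unfolding a0_def B0_def
    using beta by (simp add: Kh_def sum_nonneg)
  have c: "c > 0" by (simp add: c_def B0_def)
  have r: "0 \<le> r" "r < 1" unfolding r_def using a0 a0B0 c by (auto simp: c_def field_simps)
  obtain Kp where Kp: "Kp > 0" "\<And>Y. norm (pinch (spec V e0) Y) \<le> norm Y * Kp"
    using bounded_linear.pos_bounded[OF bounded_linear_pin[OF V]] by blast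
  define C0 where "C0 = (\<Sum>i\<in>UNIV. \<bar>h i\<bar> * B0 * norm (spec U (\<lambda>j. if j = i then 1 else 0)))"
  define C where "C = (1/c) * (C0 * Kp)"
  have main: "mlog (Mb b) = ln c *\<^sub>R mat 1 - logser (mat 1 - (1/c) *\<^sub>R Mb b)
       \<and> (\<forall>Z::'n cmat. norm ((mat 1 - (1/c) *\<^sub>R Mb b) ** Z) \<le> r * norm Z)
       \<and> (\<forall>Z::'n cmat. norm (Z ** (mat 1 - (1/c) *\<^sub>R Mb b)) \<le> r * norm Z)
       \<and> norm (- (1/c) *\<^sub>R Md b) \<le> C" if b: "b \<in> T" for b
  proof -
    have bb: "\<bar>b\<bar> * Kh \<le> 2 * \<beta> * Kh"
      using b beta by (intro mult_right_mono) (auto simp: T_def Kh_def sum_nonneg)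
    obtain W q where W: "unitary W" and Mq: "Mb b = spec W q"
      and qb: "\<And>i. exp (- (\<bar>b\<bar> * Kh)) \<le> q i \<and> q i \<le> exp (\<bar>b\<bar> * Kh)"
      using M_spec[of b] by blast
    have q: "a0 \<le> q i" "q i \<le> B0" for i
      using qb[of i] bb unfolding a0_def B0_def by (meson exp_le_cancel_iff neg_le_iff_le order_trans)+
    have X: "mat 1 - (1/c) *\<^sub>R Mb b = spec W (\<lambda>i. 1 - q i / c)"
      unfolding Mq spec_one[OF W, symmetric] spec_scaleR spec_diff by simp
    have xi: "\<bar>1 - q i / c\<bar> \<le> r" for i
      using q[of i] c a0B0 unfolding r_def c_def by (auto simp: field_simps abs_le_iff)
    have l1: "mlog (Mb b) = ln c *\<^sub>R mat 1 - logser (mat 1 - (1/c) *\<^sub>R Mb b)"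
    proof (unfold Mq, rule mlog_series[OF W c])
      fix i
      have B0: "B0 > 0" by (simp add: B0_def)
      show "0 < q i \<and> q i \<le> c" using q[of i] a0 B0 by (auto simp: c_def)
    qed
    have l2: "\<forall>Z::'n cmat. norm ((mat 1 - (1/c) *\<^sub>R Mb b) ** Z) \<le> r * norm Z"
      unfolding X using spec_mult_bound_left[OF W, of "\<lambda>i. 1 - q i / c" r] xi by blast
    have l3: "\<forall>Z::'n cmat. norm (Z ** (mat 1 - (1/c) *\<^sub>R Mb b)) \<le> r * norm Z"
      unfolding X using spec_mult_bound_right[OF W, of "\<lambda>i. 1 - q i / c" r] xi by blast
    have "norm (Ed U h b) \<le> C0"
    proof -
      have "norm (Ed U h b) \<le> (\<Sum>i\<in>UNIV. \<bar>- h i * exp (- b * h i)\<bar> * norm (spec U (\<lambda>j. if j = i then 1 else 0)))"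
        unfolding Ed_def by (rule norm_spec_bound[OF U])
      also have "\<dots> \<le> C0" unfolding C0_def
      proof (intro sum_mono mult_right_mono)
        fix i
        have "exp (- b * h i) \<le> B0" using exp_bounds[of b i] bb unfolding B0_def by (meson exp_le_cancel_iff order_trans)
        thus "\<bar>- h i * exp (- b * h i)\<bar> \<le> \<bar>h i\<bar> * B0" by (simp add: abs_mult mult_left_mono)
      qed simp
      finally show ?thesis .
    qed
    hence "norm (Md b) \<le> C0 * Kp" using Kp by (meson mult_right_mono less_imp_le order_trans)
    hence l4: "norm (- (1/c) *\<^sub>R Md b) \<le> C" unfolding C_def using c
      by (simp add: divide_right_mono)
    show ?thesis using l1 l2 l3 l4 by blast
  qed
  have "open T" "convex T" "\<beta> \<in> T" using beta by (auto simp: T_def)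
  thus ?thesis using main c r by blast
qed

lemma L_deriv:
  assumes beta: "\<beta> > 0"
  shows "\<exists>L'. ((\<lambda>b. mlog (Mb b)) has_vector_derivative L') (at \<beta>) \<and> trace (Mb \<beta> ** L') = trace (Md \<beta>)"
proof -
  obtain T c r C where T: "open T" "convex T" "\<beta> \<in> T" and c: "c > 0" and r: "0 \<le> r" "r < 1"
    and P: "\<And>b. b \<in> T \<Longrightarrow> mlog (Mb b) = ln c *\<^sub>R mat 1 - logser (mat 1 - (1/c) *\<^sub>R Mb b)
       \<and> (\<forall>Z::'n cmat. norm ((mat 1 - (1/c) *\<^sub>R Mb b) ** Z) \<le> r * norm Z)
       \<and> (\<forall>Z::'n cmat. norm (Z ** (mat 1 - (1/c) *\<^sub>R Mb b)) \<le> r * norm Z)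
       \<and> norm (- (1/c) *\<^sub>R Md b) \<le> C"
    using local_log[OF beta] by blast
  define Xf where "Xf b = mat 1 - (1/c) *\<^sub>R Mb b" for b
  define X'f where "X'f b = - (1/c) *\<^sub>R Md b" for b
  have der: "(Xf has_vector_derivative X'f b) (at b)" for b
  proof -
    have "((\<lambda>b. (1/c) *\<^sub>R Mb b) has_vector_derivative (1/c) *\<^sub>R Md b) (at b)"
      by (rule bounded_linear.has_vector_derivative[OF bounded_linear_scaleR_right M_deriv])
    hence "((\<lambda>b. mat 1 - (1/c) *\<^sub>R Mb b) has_vector_derivative 0 - (1/c) *\<^sub>R Md b) (at b)"
      by (intro has_vector_derivative_diff has_vector_derivative_const)
    thus ?thesis unfolding Xf_def X'f_def by simp
  qed
  have ls: "((\<lambda>b. logser (Xf b)) has_vector_derivative Dsum (Xf \<beta>) (X'f \<beta>)) (at \<beta>)"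
    by (rule logser_deriv[OF T der r, of C]) (use P in \<open>auto simp: Xf_def X'f_def\<close>)
  have "((\<lambda>b. ln c *\<^sub>R mat 1 - logser (Xf b)) has_vector_derivative (- Dsum (Xf \<beta>) (X'f \<beta>))) (at \<beta>)"
  proof -
    have "((\<lambda>b. ln c *\<^sub>R mat 1 - logser (Xf b)) has_vector_derivative (0 - Dsum (Xf \<beta>) (X'f \<beta>))) (at \<beta>)"
      by (intro has_vector_derivative_diff has_vector_derivative_const ls)
    thus ?thesis by simp
  qed
  hence d: "((\<lambda>b. mlog (Mb b)) has_vector_derivative (- Dsum (Xf \<beta>) (X'f \<beta>))) (at \<beta>)"
    by (rule has_vector_derivative_transform_within_open[OF _ T(1,3)]) (use P in \<open>auto simp: Xf_def\<close>)
  have Mc: "Mb \<beta> = c *\<^sub>R (mat 1 - Xf \<beta>)" unfolding Xf_def using c by simp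
  have "trace ((mat 1 - Xf \<beta>) ** Dsum (Xf \<beta>) (X'f \<beta>)) = trace (X'f \<beta>)"
    by (rule trace_Dsum_telescope[OF r]) (use P[OF T(3)] in \<open>auto simp: Xf_def\<close>)
  hence "trace (Mb \<beta> ** (- Dsum (Xf \<beta>) (X'f \<beta>))) = trace (Md \<beta>)"
    unfolding Mc using c
    by (simp add: scaleR_mult_left mult_uminus_right trace_uminus trace_scaleR X'f_def)
  thus ?thesis using d by blast
qed

end

lemma unitary_row: "unitary Y \<Longrightarrow> (\<Sum>j\<in>UNIV. (norm (Y$i$j))\<^sup>2) = 1"
proof -
  assume Y: "unitary Y"
  have "(Y ** cadj Y) $ i $ i = 1" using Y by (simp add: unitary_def mat_nth)
  hence "(\<Sum>j\<in>UNIV. Y$i$j * cnj (Y$i$j)) = 1" by (simp add: mmult_nth)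
  moreover have "complex_of_real (\<Sum>j\<in>UNIV. (norm (Y$i$j))\<^sup>2) = (\<Sum>j\<in>UNIV. Y$i$j * cnj (Y$i$j))"
    by (simp only: of_real_sum complex_norm_square)
  ultimately have "complex_of_real (\<Sum>j\<in>UNIV. (norm (Y$i$j))\<^sup>2) = complex_of_real 1" by simp
  thus ?thesis by (simp only: of_real_eq_iff)
qed

lemma unitary_col: "unitary Y \<Longrightarrow> (\<Sum>i\<in>UNIV. (norm (Y$i$j))\<^sup>2) = 1"
proof -
  assume Y: "unitary Y"
  have "(cadj Y ** Y) $ j $ j = 1" using Y by (simp add: unitary_def mat_nth)
  hence "(\<Sum>i\<in>UNIV. cnj (Y$i$j) * Y$i$j) = 1" by (simp add: mmult_nth)
  moreover have "complex_of_real (\<Sum>i\<in>UNIV. (norm (Y$i$j))\<^sup>2) = (\<Sum>i\<in>UNIV. cnj (Y$i$j) * Y$i$j)"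
    by (simp only: of_real_sum complex_norm_square mult.commute)
  ultimately have "complex_of_real (\<Sum>i\<in>UNIV. (norm (Y$i$j))\<^sup>2) = complex_of_real 1" by simp
  thus ?thesis by (simp only: of_real_eq_iff)
qed

lemma trace_spec_spec:
  assumes U: "unitary U" and W: "unitary W"
  shows "trace (spec U p ** spec W g) =
    complex_of_real (\<Sum>i\<in>UNIV. \<Sum>j\<in>UNIV. p i * g j * (norm ((cadj U ** W)$i$j))\<^sup>2)"
proof -
  define Y where "Y = cadj U ** W"
  define P where "P = dmat (\<lambda>i. complex_of_real (p i))"
  define G where "G = dmat (\<lambda>i. complex_of_real (g i))"
  have "trace (spec U p ** spec W g) = trace (U ** (P ** cadj U ** W ** G ** cadj W))"
    by (simp add: spec_def P_def G_def matrix_mul_assoc)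
  also have "\<dots> = trace ((P ** cadj U ** W ** G ** cadj W) ** U)" by (rule trace_mul_sym)
  also have "\<dots> = trace (P ** Y ** G ** cadj Y)"
    by (simp add: Y_def cadj_mult matrix_mul_assoc)
  also have "\<dots> = (\<Sum>i\<in>UNIV. \<Sum>j\<in>UNIV. complex_of_real (p i * g j * (norm (Y$i$j))\<^sup>2))"
    unfolding trace_def
  proof (rule sum.cong)
    fix i
    show "(P ** Y ** G ** cadj Y) $ i $ i = (\<Sum>j\<in>UNIV. complex_of_real (p i * g j * (norm (Y$i$j))\<^sup>2))"
      unfolding mmult_nth[of "P ** Y ** G"]
    proof (rule sum.cong)
      fix j
      have "(P ** Y ** G) $ i $ j = complex_of_real (p i) * Y$i$j * complex_of_real (g j)"
        unfolding G_def P_def dmat_mult_right by (simp add: dmat_mult_left)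
      thus "(P ** Y ** G) $ i $ j * cadj Y $ j $ i = complex_of_real (p i * g j * (norm (Y$i$j))\<^sup>2)"
        unfolding cadj_nth of_real_mult complex_norm_square by (simp add: mult_ac)
    qed simp
  qed simp
  finally show ?thesis by (simp add: Y_def)
qed

lemma klein:
  assumes U: "unitary U" and W: "unitary W" and p: "\<And>i. p i > 0" and q: "\<And>i. q i > 0"
    and s: "(\<Sum>i\<in>UNIV. p i) = (\<Sum>i\<in>UNIV. q i)"
  shows "\<exists>x\<ge>0. trace (spec U p ** spec U (\<lambda>i. ln (p i))) - trace (spec U p ** spec W (\<lambda>i. ln (q i)))
     = complex_of_real x"
proof -
  define Y where "Y = cadj U ** W"
  have Y: "unitary Y" unfolding Y_def by (intro unitary_mult unitary_cadj U W)
  define w where "w i j = (norm (Y$i$j))\<^sup>2" for i j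
  have t1: "trace (spec U p ** spec U (\<lambda>i. ln (p i))) = complex_of_real (\<Sum>i\<in>UNIV. \<Sum>j\<in>UNIV. w i j * (p i * ln (p i)))"
  proof -
    have "trace (spec U p ** spec U (\<lambda>i. ln (p i))) = complex_of_real (\<Sum>i\<in>UNIV. p i * ln (p i))"
      by (simp add: spec_mult[OF U] trace_spec[OF U])
    also have "(\<Sum>i\<in>UNIV. p i * ln (p i)) = (\<Sum>i\<in>UNIV. \<Sum>j\<in>UNIV. w i j * (p i * ln (p i)))"
      by (simp add: sum_distrib_right[symmetric] w_def unitary_row[OF Y])
    finally show ?thesis .
  qed
  have t2: "trace (spec U p ** spec W (\<lambda>i. ln (q i))) = complex_of_real (\<Sum>i\<in>UNIV. \<Sum>j\<in>UNIV. w i j * (p i * ln (q j)))"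
    unfolding trace_spec_spec[OF U W] Y_def[symmetric] w_def by (simp add: mult_ac)
  define x where "x = (\<Sum>i\<in>UNIV. \<Sum>j\<in>UNIV. w i j * (p i * ln (p i))) - (\<Sum>i\<in>UNIV. \<Sum>j\<in>UNIV. w i j * (p i * ln (q j)))"
  have "x = (\<Sum>i\<in>UNIV. \<Sum>j\<in>UNIV. w i j * (p i * (ln (p i) - ln (q j))))"
    unfolding x_def by (simp add: sum_subtractf[symmetric] algebra_simps)
  also have "\<dots> \<ge> (\<Sum>i\<in>UNIV. \<Sum>j\<in>UNIV. w i j * (p i - q j))"
  proof (intro sum_mono mult_left_mono)
    fix i j
    have "ln (q j / p i) \<le> q j / p i - 1" using p[of i] q[of j] by (intro ln_le_minus_one) simp
    hence "ln (q j) - ln (p i) \<le> q j / p i - 1" using p[of i] q[of j] by (simp add: ln_div)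
    hence "p i * (ln (q j) - ln (p i)) \<le> p i * (q j / p i - 1)" using p[of i] by (intro mult_left_mono) auto
    also have "p i * (q j / p i - 1) = q j - p i" using p[of i] by (simp add: field_simps)
    finally have h: "p i * (ln (q j) - ln (p i)) \<le> q j - p i" .
    thus "p i - q j \<le> p i * (ln (p i) - ln (q j))" unfolding right_diff_distrib by linarith
    show "0 \<le> w i j" by (simp add: w_def)
  qed
  also have "(\<Sum>i\<in>UNIV. \<Sum>j\<in>UNIV. w i j * (p i - q j)) = 0"
  proof -
    have "(\<Sum>i\<in>UNIV. \<Sum>j\<in>UNIV. w i j * (p i - q j))
        = (\<Sum>i\<in>UNIV. p i * (\<Sum>j\<in>UNIV. w i j)) - (\<Sum>j\<in>UNIV. q j * (\<Sum>i\<in>UNIV. w i j))"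
    proof -
      have "(\<Sum>i\<in>UNIV. \<Sum>j\<in>UNIV. w i j * (p i - q j))
          = (\<Sum>i\<in>UNIV. \<Sum>j\<in>UNIV. p i * w i j) - (\<Sum>i\<in>UNIV. \<Sum>j\<in>UNIV. q j * w i j)"
        by (simp add: sum_subtractf[symmetric] algebra_simps)
      also have "(\<Sum>i\<in>UNIV. \<Sum>j\<in>UNIV. q j * w i j) = (\<Sum>j\<in>UNIV. \<Sum>i\<in>UNIV. q j * w i j)"
        by (rule sum.swap)
      finally show ?thesis by (simp add: sum_distrib_left)
    qed
    also have "\<dots> = 0" by (simp add: w_def unitary_row[OF Y] unitary_col[OF Y] s)
    finally show ?thesis .
  qed
  finally have "x \<ge> 0" .
  moreover have "trace (spec U p ** spec U (\<lambda>i. ln (p i))) - trace (spec U p ** spec W (\<lambda>i. ln (q i))) = complex_of_real x"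
    unfolding t1 t2 x_def by simp
  ultimately show ?thesis by blast
qed

theorem mainTheorem8:
  fixes H0 HI :: "'n::finite cmat" and lam \<beta> :: real
  assumes "hermitian H0" and "hermitian HI" and "\<beta> > 0"
  defines "H \<equiv> H0 + lam *\<^sub>R HI"
  defines "Z \<equiv> partition_fn H \<beta>"
  defines "\<rho> \<equiv> gibbs H \<beta>"
  defines "\<rho>t \<equiv> pinch H0 \<rho>"
  defines "Ht \<equiv> eff_ham H0 H"
  defines "F \<equiv> free_energy H"
  defines "S \<equiv> \<beta>\<^sup>2 * deriv F \<beta>"
  defines "U \<equiv> deriv (\<lambda>b. b * F b) \<beta>"
  defines "St \<equiv> - trace (\<rho>t ** mlog \<rho>t)"
  defines "Ut \<equiv> trace (Ht \<beta> ** \<rho>t)"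
  defines "dS \<equiv> - (\<beta>\<^sup>2) *\<^sub>R trace (\<rho>t ** vector_derivative Ht (at \<beta>))"
  defines "dU \<equiv> - \<beta> *\<^sub>R trace (\<rho>t ** vector_derivative Ht (at \<beta>))"
  shows "\<rho>t = (1 / Z) *\<^sub>R mexp ((- \<beta>) *\<^sub>R Ht \<beta>)
    \<and> F differentiable (at \<beta>) \<and> Ht differentiable (at \<beta>)
    \<and> complex_of_real S = - trace (\<rho> ** mlog \<rho>)
    \<and> complex_of_real U = trace (H ** \<rho>)
    \<and> complex_of_real S = St - dS
    \<and> complex_of_real U = Ut - dU
    \<and> dU = dS / complex_of_real \<beta>
    \<and> dS \<in> \<real> \<and> Re dS \<ge> 0 \<and> dU \<in> \<real> \<and> Re dU \<ge> 0"
proof -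
  have beta: "\<beta> > 0" by fact
  hence b0: "\<beta> \<noteq> 0" by simp
  obtain V e0 where V: "unitary V" and H0s: "H0 = spec V e0" using spectral_spec[OF assms(1)] by blast
  have hH: "hermitian H" unfolding H_def by (intro hermitian_add hermitian_scaleR assms)
  obtain W0 hh where W0: "unitary W0" and Hs: "H = spec W0 hh" using spectral_spec[OF hH] by blast
  have mexpH: "mexp ((- b) *\<^sub>R H) = Eb W0 hh b" for b
    unfolding Hs spec_scaleR mexp_spec[OF W0] Eb_def by simp
  define Zf where "Zf b = (\<Sum>i\<in>UNIV. exp (- b * hh i))" for b
  define Zd where "Zd b = (\<Sum>i\<in>UNIV. - hh i * exp (- b * hh i))" for b
  have pf: "partition_fn H b = Zf b" for b
    unfolding partition_fn_def mexpH Eb_def trace_spec[OF W0] Zf_def by simp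
  have Zfpos: "Zf b > 0" for b unfolding Zf_def by (intro sum_pos) auto
  have ZZ: "Z = Zf \<beta>" unfolding Z_def pf ..
  have Zpos: "Z > 0" using Zfpos ZZ by simp
  have Fdef: "F = (\<lambda>b. - ln (Zf b) / b)"
    unfolding F_def free_energy_def pf by simp
  have dZ: "(Zf has_real_derivative Zd \<beta>) (at \<beta>)"
    unfolding Zf_def Zd_def
    by (rule DERIV_sum) (auto intro!: derivative_eq_intros)
  have dlnZ: "((\<lambda>b. ln (Zf b)) has_real_derivative (1 / Zf \<beta>) * Zd \<beta>) (at \<beta>)"
    by (rule DERIV_chain2[OF DERIV_ln_divide[OF Zfpos] dZ])
  define Fd where "Fd = ((- ((1 / Zf \<beta>) * Zd \<beta>)) * \<beta> - (- ln (Zf \<beta>)) * 1) / (\<beta> * \<beta>)"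
  have dF: "(F has_real_derivative Fd) (at \<beta>)"
    unfolding Fdef Fd_def
    by (rule DERIV_divide[OF DERIV_minus[OF dlnZ] DERIV_ident b0])
  have dbF: "((\<lambda>b. b * F b) has_real_derivative (1 * F \<beta> + Fd * \<beta>)) (at \<beta>)"
    by (rule DERIV_mult[OF DERIV_ident dF])
  have Fdiff: "F differentiable (at \<beta>)" using dF real_differentiable_def by blast
  have Sval: "S = \<beta>\<^sup>2 * Fd" unfolding S_def DERIV_imp_deriv[OF dF] ..
  have Uval: "U = 1 * F \<beta> + Fd * \<beta>" unfolding U_def DERIV_imp_deriv[OF dbF] ..
  define pz where "pz i = exp (- \<beta> * hh i) / Z" for i
  have pzpos: "pz i > 0" for i using Zpos by (simp add: pz_def)
  have sumpz: "(\<Sum>i\<in>UNIV. pz i) = 1"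
    using Zpos unfolding pz_def ZZ Zf_def by (simp add: sum_divide_distrib[symmetric])
  define A where "A = (\<Sum>i\<in>UNIV. hh i * pz i)"
  have ZdA: "Zd \<beta> / Z = - A"
    unfolding A_def pz_def Zd_def by (simp add: sum_divide_distrib sum_negf)
  have Sreal: "S = \<beta> * A + ln Z"
    unfolding Sval Fd_def using b0 Zpos ZdA ZZ by (simp add: field_simps power2_eq_square)
  have Ureal: "U = A"
    unfolding Uval Fd_def Fdef using b0 Zpos ZdA ZZ by (simp add: field_simps)
  have rho: "\<rho> = spec W0 pz"
    unfolding \<rho>_def gibbs_def mexpH Eb_def spec_scaleR pz_def Z_def[symmetric] by (simp add: field_simps)
  have mlogrho: "mlog (spec W0 pz) = spec W0 (\<lambda>i. ln (pz i))" by (rule mlog_spec[OF W0 pzpos])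
  have lnpz: "ln (pz i) = - \<beta> * hh i - ln Z" for i using Zpos by (simp add: pz_def ln_div)
  have sum_pl: "(\<Sum>i\<in>UNIV. pz i * ln (pz i)) = - \<beta> * A - ln Z"
  proof -
    have "(\<Sum>i\<in>UNIV. pz i * ln (pz i)) = (\<Sum>i\<in>UNIV. - \<beta> * (hh i * pz i) - ln Z * pz i)"
      by (rule sum.cong) (simp_all add: lnpz algebra_simps)
    also have "\<dots> = - \<beta> * A - ln Z"
      by (simp add: sum_subtractf sum_negf sum_distrib_left[symmetric] A_def sumpz)
    finally show ?thesis .
  qed
  have trrho: "trace (\<rho> ** mlog \<rho>) = complex_of_real (- \<beta> * A - ln Z)"
    unfolding rho mlogrho spec_mult[OF W0] trace_spec[OF W0] sum_pl ..
  have C1: "complex_of_real S = - trace (\<rho> ** mlog \<rho>)"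
    unfolding trrho Sreal by simp
  have C2: "complex_of_real U = trace (H ** \<rho>)"
    unfolding Hs rho spec_mult[OF W0] trace_spec[OF W0] Ureal A_def ..
  define M where "M b = pinch (spec V e0) (Eb W0 hh b)" for b
  have Htf: "Ht = (\<lambda>b. (- 1 / b) *\<^sub>R mlog (M b))"
    unfolding Ht_def eff_ham_def mexpH H0s M_def ..
  have rhot: "\<rho>t = (1 / Z) *\<^sub>R M \<beta>"
    unfolding \<rho>t_def \<rho>_def gibbs_def mexpH H0s M_def pin_scaleR[OF V] Z_def ..
  obtain W q where W: "unitary W" and Mq: "M \<beta> = spec W q"
    and qb: "\<And>i. exp (- (\<bar>\<beta>\<bar> * Kh hh)) \<le> q i \<and> q i \<le> exp (\<bar>\<beta>\<bar> * Kh hh)"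
    using M_spec[OF W0 V, of e0 hh \<beta>] unfolding M_def by blast
  have qpos: "q i > 0" for i using qb[of i] by (meson exp_gt_zero less_le_trans)
  define L where "L = mlog (M \<beta>)"
  have L: "L = spec W (\<lambda>i. ln (q i))" unfolding L_def Mq by (rule mlog_spec[OF W qpos])
  have C0: "\<rho>t = (1 / Z) *\<^sub>R mexp ((- \<beta>) *\<^sub>R Ht \<beta>)"
  proof -
    have "(- \<beta>) *\<^sub>R Ht \<beta> = L" unfolding Htf L_def using b0 by simp
    hence "mexp ((- \<beta>) *\<^sub>R Ht \<beta>) = M \<beta>" unfolding L_def Mq by (simp add: mexp_mlog[OF W qpos])
    thus ?thesis unfolding rhot by simp
  qed
  obtain L' where dL: "((\<lambda>b. mlog (M b)) has_vector_derivative L') (at \<beta>)"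
    and trL': "trace (M \<beta> ** L') = trace (pinch (spec V e0) (Ed W0 hh \<beta>))"
    using L_deriv[OF W0 V beta, of e0 hh] unfolding M_def by blast
  define c2 where "c2 = (0 * \<beta> - (- 1) * 1) / (\<beta> * \<beta>)"
  have dinv: "((\<lambda>b. - 1 / b) has_real_derivative c2) (at \<beta>)"
    unfolding c2_def by (rule DERIV_divide[OF DERIV_const DERIV_ident b0])
  define Htd where "Htd = (- 1 / \<beta>) *\<^sub>R L' + c2 *\<^sub>R L"
  have dHt: "(Ht has_vector_derivative Htd) (at \<beta>)"
    unfolding Htf Htd_def L_def by (rule has_vector_derivative_scaleR[OF dinv dL])
  have vd: "vector_derivative Ht (at \<beta>) = Htd" by (rule vector_derivative_at[OF dHt])
  have Htdiff: "Ht differentiable (at \<beta>)"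
    using dHt unfolding has_vector_derivative_def differentiable_def by blast
  have trMd: "trace (pinch (spec V e0) (Ed W0 hh \<beta>)) = complex_of_real (Zd \<beta>)"
    unfolding trace_pin[OF V] Ed_def trace_spec[OF W0] Zd_def ..
  define tM where "tM = trace (M \<beta> ** L)"
  have T: "trace (\<rho>t ** Htd) = (1 / Z) *\<^sub>R ((- 1 / \<beta>) *\<^sub>R complex_of_real (Zd \<beta>) + c2 *\<^sub>R tM)"
    unfolding rhot Htd_def tM_def
    by (simp add: scaleR_mult_left scaleR_mult_right mult_add_right mult_diff_right trace_add trace_sub trace_scaleR trL' trMd scaleR_diff_right)
  define tau where "tau = trace (\<rho>t ** L)"
  have tau: "tau = (1 / Z) *\<^sub>R tM" unfolding tau_def rhot tM_def by (simp add: scaleR_mult_left trace_scaleR)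
  have trrhot: "trace \<rho>t = 1"
  proof -
    have "trace \<rho>t = trace \<rho>" unfolding \<rho>t_def H0s by (rule trace_pin[OF V])
    also have "\<dots> = 1" unfolding rho trace_spec[OF W0] sumpz by simp
    finally show ?thesis .
  qed
  define qt where "qt i = (1 / Z) * q i" for i
  have qtpos: "qt i > 0" for i using qpos[of i] Zpos by (simp add: qt_def)
  have rhotq: "\<rho>t = spec W qt" unfolding rhot Mq qt_def spec_scaleR ..
  have sumqt: "(\<Sum>i\<in>UNIV. qt i) = 1"
    using trrhot unfolding rhotq trace_spec[OF W] by (simp only: of_real_eq_1_iff)
  have mlogrhot: "mlog \<rho>t = L - (ln Z) *\<^sub>R mat 1"
  proof -
    have "mlog \<rho>t = spec W (\<lambda>i. ln (qt i))" unfolding rhotq by (rule mlog_spec[OF W qtpos])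
    also have "(\<lambda>i. ln (qt i)) = (\<lambda>i. ln (q i) - ln Z)"
    proof (rule ext)
      fix i
      have "qt i = q i / Z" by (simp add: qt_def)
      thus "ln (qt i) = ln (q i) - ln Z" using qpos[of i] Zpos by (simp add: ln_div)
    qed
    also have "spec W (\<lambda>i. ln (q i) - ln Z) = L - spec W (\<lambda>i. ln Z)" unfolding L spec_diff ..
    also have "spec W (\<lambda>i. ln Z) = (ln Z) *\<^sub>R mat 1" unfolding spec_const[OF W] mat_scaleR ..
    finally show ?thesis .
  qed
  have Stv: "St = - tau + complex_of_real (ln Z)"
  proof -
    have o: "r *\<^sub>R (1::complex) = complex_of_real r" for r by (simp add: of_real_def)
    show ?thesis unfolding St_def mlogrhot tau_def
      by (simp add: mult_diff_right trace_sub scaleR_mult_right trace_scaleR trrhot o)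
  qed
  have Utv: "Ut = (- 1 / \<beta>) *\<^sub>R tau"
    unfolding Ut_def Htf tau_def L_def[symmetric]
    by (simp add: mult_uminus_left trace_uminus scaleR_mult_left trace_scaleR trace_mul_sym[of L])
  have c2v: "c2 = 1 / \<beta>\<^sup>2" unfolding c2_def by (simp add: power2_eq_square)
  have ZdZ: "Zd \<beta> = - A * Z" using ZdA Zpos by (simp add: field_simps)
  have bc: "complex_of_real \<beta> \<noteq> 0" using b0 by simp
  have zc: "complex_of_real Z \<noteq> 0" using Zpos by simp
  have dSv: "dS = - tau - complex_of_real (\<beta> * A)"
    unfolding dS_def vd T tau c2v ZdZ using bc zc
    by (simp add: scaleR_conv_of_real field_simps power2_eq_square)
  have dUv: "dU = - (1 / complex_of_real \<beta>) * tau - complex_of_real A"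
    unfolding dU_def vd T tau c2v ZdZ using bc zc
    by (simp add: scaleR_conv_of_real field_simps power2_eq_square)
  have C3: "complex_of_real S = St - dS" unfolding Sreal Stv dSv by simp
  have C4: "complex_of_real U = Ut - dU" unfolding Ureal Utv dUv by (simp add: scaleR_conv_of_real)
  have C5: "dU = dS / complex_of_real \<beta>" unfolding dUv dSv using bc by (simp add: field_simps)
  have mlogrhot': "mlog \<rho>t = spec W (\<lambda>i. ln (qt i))" unfolding rhotq by (rule mlog_spec[OF W qtpos])
  have pinrhot: "spec W qt = pinch (spec V e0) \<rho>" using rhotq unfolding \<rho>t_def H0s by simp
  have trsame: "trace (\<rho>t ** mlog \<rho>t) = trace (\<rho> ** mlog \<rho>t)"
  proof -
    have "trace (\<rho>t ** mlog \<rho>t) = trace (\<rho> ** pinch (spec V e0) (mlog \<rho>t))"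
      unfolding \<rho>t_def H0s by (rule trace_pin_mult[OF V])
    also have "pinch (spec V e0) (mlog \<rho>t) = mlog \<rho>t"
      unfolding rhotq by (rule pin_mlog[OF V W qtpos pinrhot])
    finally show ?thesis .
  qed
  have dSk: "dS = trace (\<rho> ** mlog \<rho>) - trace (\<rho> ** mlog \<rho>t)"
    using C1 C3 trsame unfolding St_def by (simp add: algebra_simps)
  have "\<exists>x\<ge>0. trace (spec W0 pz ** spec W0 (\<lambda>i. ln (pz i))) - trace (spec W0 pz ** spec W (\<lambda>i. ln (qt i))) = complex_of_real x"
    by (rule klein[OF W0 W]) (use pzpos qtpos sumpz sumqt in auto)
  then obtain x where x: "x \<ge> 0" and
    kx: "trace (spec W0 pz ** spec W0 (\<lambda>i. ln (pz i))) - trace (spec W0 pz ** spec W (\<lambda>i. ln (qt i))) = complex_of_real x"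
    by blast
  have dSx: "dS = complex_of_real x"
    unfolding dSk mlogrhot' using kx unfolding rho mlogrho .
  have dUx: "dU = complex_of_real (x / \<beta>)" unfolding C5 dSx by simp
  show ?thesis
    using C0 Fdiff Htdiff C1 C2 C3 C4 C5 x beta unfolding dSx dUx by simp
qed


end
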